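(* Let $a<b$ be real numbers, let $K\ge 2$, $\mathcal{I}=\{1,\dots,K\}$, and let $D_{cdf}([a,b])$ be the set of cdfs $F$ on $\mathbb{R}$ with $F(a-)=0$ and $F(b)=1$. Let $\mathscr{D}\subseteq D_{cdf}([a,b])$ be nonempty and convex. Let $\mathsf{T}:D_{cdf}([a,b])\to\mathbb{R}$ satisfy, for some $C>0$, $|\mathsf{T}(F)-\mathsf{T}(G)|\le C\|F-G\|_\infty$ for all $F\in\mathscr{D}$, $G\in D_{cdf}([a,b])$. Suppose $\mathscr{D}$ contains $H_1,H_2$ such that $J_\tau:=\tau H_1+(1-\tau)H_2\in\mathscr{D}$ for all $\tau\in[0,1]$ and, for some $c_->0$, $\mathsf{T}(J_{\tau_2})-\mathsf{T}(J_{\tau_1})\ge c_-(\tau_2-\tau_1)$ for all $0\le\tau_1\le\tau_2\le 1$. Let $\mathscr{M}_K$ be a closed subset of the simplex $\mathscr{S}_K$ with at least two elements. Then there exists a constant $c>0$, independent of $K$, $n$ and $\mathscr{M}_K$, such that for every policy $\pi$ with recommendations in $\mathscr{M}_K$ and every randomization measure $\mathbb{P}_G$, $$\sup_{F^1,\dots,F^K\in\{J_\tau:\tau\in[0,1]\}}\mathbb{E}[r_n(\pi,\mathscr{M}_K)]\ge c\,\mathrm{diam}^2(\mathscr{M}_K)/\sqrt{n}\quad\text{for every } n\ge K,$$ where the supremum is over all potential outcome distributions with independent marginals having cdfs $F^1,\dots,F^K$ in $\{J_\tau:\tau\in[0,1]\}$, and $\mathrm{diam}(\mathscr{M}_K)=\max\{\|\nu-\gamma\|:\nu,\gamma\in\mathscr{M}_K\}$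 (Euclidean norm).
   Context: $\|F-G\|_\infty=\sup_x|F(x)-G(x)|$. $\mathscr{S}_K=\{\delta\in[0,1]^K:\sum_i\delta_i=1\}$. For $\delta\in\mathscr{S}_K$ and $\mathbf{F}=(F^1,\dots,F^K)$, $\langle\delta,\mathbf{F}\rangle=\sum_i\delta_iF^i$. Setting: potential outcome vectors $Y_t=(Y_{1,t},\dots,Y_{K,t})$, $t\in\mathbb{N}$, are i.i.d., with $Y_{i,t}$ having cdf $F^i$; randomization variables $G_t$, $t\in\mathbb{N}$, are i.i.d. with distribution $\mathbb{P}_G$ (the randomization measure) and independent of $(Y_t)$. A policy $\pi$ with recommendations in $\mathscr{M}_K$ is a triangular array of measurable maps: for each $n\ge K$, $\pi_{n,t}:([a,b]\times\mathbb{R})^{t-1}\times\mathbb{R}\to\mathcal{I}$ for $t=1,\dots,n$ and $\pi_{n,n+1}:([a,b]\times\mathbb{R})^n\times\mathbb{R}\to\mathscr{M}_K$. Inputs are defined recursively: $(Z_0,G_1)=(G_1)$ and $Z_{t-1}=(Y_{\pi_{n,t-1}(Z_{t-2},G_{t-1}),t-1},G_{t-1},\dots,Y_{\pi_{n,1}(G_1),1},G_1)$; subject $t$ is assigned to treatment $\pi_{n,t}(Z_{t-1},G_t)$ and the final recommendation is $\pi_{n,n+1}(Z_n,G_{n+1})$. The regret is $r_n(\pi,\mathscr{M}_K)=\max_{\delta\in\mathscr{M}_K}\mathsf{T}(\langle\delta,\mathbf{F}\rangle)-\mathsf{T}(\langle\pi_{n,n+1}(Z_n,G_{n+1}),\mathbf{F}\rangle)$.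 *)

theory Defs
  imports "HOL-Probability.Probability"
begin

definition is_cdf :: "(real \<Rightarrow> real) \<Rightarrow> bool" where
  "is_cdf F \<longleftrightarrow> mono F \<and> (\<forall>x. continuous (at_right x) F)
     \<and> (F \<longlongrightarrow> 0) at_bot \<and> (F \<longlongrightarrow> 1) at_top"

definition Dcdf :: "real \<Rightarrow> real \<Rightarrow> (real \<Rightarrow> real) set" where
  "Dcdf a b = {F. is_cdf F \<and> (F \<longlongrightarrow> 0) (at_left a) \<and> F b = 1}"

definition supdist :: "(real \<Rightarrow> real) \<Rightarrow> (real \<Rightarrow> real) \<Rightarrow> real" where
  "supdist F G = (SUP x. \<bar>F x - G x\<bar>)"

definition convex_fset :: "(real \<Rightarrow> real) set \<Rightarrow> bool" where
  "convex_fset D \<longleftrightarrow> (\<forall>F\<in>D. \<forall>G\<in>D. \<forall>u\<in>{0..1::real}. (\<lambda>x. u * F x + (1 - u) * G x) \<in> D)"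

text \<open>Treatments are indexed by {1..K}; weight vectors are extensional functions on {1..K}.\<close>
definition simplexK :: "nat \<Rightarrow> (nat \<Rightarrow> real) set" where
  "simplexK K = {\<delta> \<in> PiE {1..K} (\<lambda>_. {0..1}). (\<Sum>i=1..K. \<delta> i) = 1}"

definition mix :: "nat \<Rightarrow> (nat \<Rightarrow> real) \<Rightarrow> (nat \<Rightarrow> real \<Rightarrow> real) \<Rightarrow> (real \<Rightarrow> real)" where
  "mix K \<delta> F = (\<lambda>x. \<Sum>i=1..K. \<delta> i * F i x)"

definition diamK :: "nat \<Rightarrow> (nat \<Rightarrow> real) set \<Rightarrow> real" where
  "diamK K M = (SUP p \<in> M \<times> M. L2_set (\<lambda>i. fst p i - snd p i) {1..K})"

text \<open>Measurable space of histories ((Y_s, G_s))_{s=1..m} in ([a,b] x R)^m.\<close>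
definition Hspace :: "real \<Rightarrow> real \<Rightarrow> nat \<Rightarrow> (nat \<Rightarrow> real \<times> real) measure" where
  "Hspace a b m = PiM {1..m} (\<lambda>_. restrict_space borel {a..b} \<Otimes>\<^sub>M (borel :: real measure))"

text \<open>A policy: assignment maps pol n t (t = 1..n) into {1..K} and recommendation
  maps recm n into M, all measurable, for every n \<ge> K.\<close>
definition is_policy :: "nat \<Rightarrow> real \<Rightarrow> real \<Rightarrow> (nat \<Rightarrow> real) set
    \<Rightarrow> (nat \<Rightarrow> nat \<Rightarrow> (nat \<Rightarrow> real \<times> real) \<Rightarrow> real \<Rightarrow> nat)
    \<Rightarrow> (nat \<Rightarrow> (nat \<Rightarrow> real \<times> real) \<Rightarrow> real \<Rightarrow> (nat \<Rightarrow> real)) \<Rightarrow> bool" where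
  "is_policy K a b M pol recm \<longleftrightarrow>
     (\<forall>n\<ge>K. (\<forall>t\<in>{1..n}. (\<lambda>(h, g). pol n t h g)
                 \<in> measurable (Hspace a b (t - 1) \<Otimes>\<^sub>M borel) (count_space {1..K}))
          \<and> (\<lambda>(h, g). recm n h g)
                 \<in> measurable (Hspace a b n \<Otimes>\<^sub>M borel) (restrict_space (PiM {1..K} (\<lambda>_. borel)) M))"

text \<open>History Z_t after t subjects: Z_t s = (Y_{assigned arm, s}, G_s) for s = 1..t.
  y (s,i) is the potential outcome of subject s under treatment i, g s = G_s.\<close>
primrec hist :: "(nat \<Rightarrow> nat \<Rightarrow> (nat \<Rightarrow> real \<times> real) \<Rightarrow> real \<Rightarrow> nat) \<Rightarrow> nat
    \<Rightarrow> (nat \<times> nat \<Rightarrow> real) \<Rightarrow> (nat \<Rightarrow> real) \<Rightarrow> nat \<Rightarrow> (nat \<Rightarrow> real \<times> real)" where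
  "hist pol n y g 0 = (\<lambda>_. undefined)"
| "hist pol n y g (Suc t) = (hist pol n y g t)(Suc t :=
      (y (Suc t, pol n (Suc t) (hist pol n y g t) (g (Suc t))), g (Suc t)))"

definition regret :: "((real \<Rightarrow> real) \<Rightarrow> real) \<Rightarrow> nat \<Rightarrow> (nat \<Rightarrow> real) set
    \<Rightarrow> (nat \<Rightarrow> nat \<Rightarrow> (nat \<Rightarrow> real \<times> real) \<Rightarrow> real \<Rightarrow> nat)
    \<Rightarrow> (nat \<Rightarrow> (nat \<Rightarrow> real \<times> real) \<Rightarrow> real \<Rightarrow> (nat \<Rightarrow> real))
    \<Rightarrow> (nat \<Rightarrow> real \<Rightarrow> real) \<Rightarrow> nat \<Rightarrow> (nat \<times> nat \<Rightarrow> real) \<Rightarrow> (nat \<Rightarrow> real) \<Rightarrow> real" where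
  "regret T K M pol recm F n y g =
     (SUP \<delta>\<in>M. T (mix K \<delta> F)) - T (mix K (recm n (hist pol n y g n) (g (Suc n))) F)"

text \<open>Canonical probability space: independent outcomes Y_{i,t} ~ F^i (t = 1..n, i = 1..K)
  and independent G_t ~ P_G (t = 1..n+1).\<close>
definition outcome_space :: "real \<Rightarrow> real \<Rightarrow> nat \<Rightarrow> nat \<Rightarrow> (nat \<Rightarrow> real \<Rightarrow> real)
    \<Rightarrow> (nat \<times> nat \<Rightarrow> real) measure" where
  "outcome_space a b K n F =
     PiM ({1..n} \<times> {1..K}) (\<lambda>(t, i). restrict_space (interval_measure (F i)) {a..b})"

definition sample_space :: "real \<Rightarrow> real \<Rightarrow> nat \<Rightarrow> nat \<Rightarrow> (nat \<Rightarrow> real \<Rightarrow> real) \<Rightarrow> real measure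
    \<Rightarrow> ((nat \<times> nat \<Rightarrow> real) \<times> (nat \<Rightarrow> real)) measure" where
  "sample_space a b K n F PG = outcome_space a b K n F \<Otimes>\<^sub>M PiM {1..Suc n} (\<lambda>_. PG)"

definition expected_regret where
  "expected_regret a b T K M pol recm F PG n =
     (\<integral>\<omega>. regret T K M pol recm F n (fst \<omega>) (snd \<omega>) \<partial>sample_space a b K n F PG)"

end

theory Submission
  imports Defs
begin

lemma bounded_integral:
  fixes f :: "'a \<Rightarrow> real"
  assumes "prob_space M" "f \<in> borel_measurable M" "\<And>x. x \<in> space M \<Longrightarrow> \<bar>f x\<bar> \<le> B"
  shows "integrable M f" "\<bar>integral\<^sup>L M f\<bar> \<le> B"
proof -
  interpret prob_space M by fact
  show i: "integrable M f"
    using assms by (intro integrable_const_bound[where B=B]) auto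
  have "\<bar>integral\<^sup>L M f\<bar> \<le> (\<integral>x. \<bar>f x\<bar> \<partial>M)"
    using integral_norm_bound[of M f] by simp
  also have "\<dots> \<le> B"
    using assms i by (intro integral_le_const) (auto intro!: AE_I2)
  finally show "\<bar>integral\<^sup>L M f\<bar> \<le> B" .
qed

lemma mix_expand:
  fixes N0 N1 :: "'a measure" and Nm :: "'i \<Rightarrow> 'a measure" and p :: "'i \<Rightarrow> real"
  assumes P0: "prob_space N0" and P1: "prob_space N1" and Pm: "\<And>k. prob_space (Nm k)"
    and S1: "sets N1 = sets N0" and Sm: "\<And>k. sets (Nm k) = sets N0"
    and p01: "\<And>k. 0 \<le> p k \<and> p k \<le> 1"
    and mix: "\<And>k f B. f \<in> borel_measurable N0 \<Longrightarrow> (\<And>x. x \<in> space N0 \<Longrightarrow> \<bar>f x\<bar> \<le> B) \<Longrightarrow>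
       (\<integral>x. f x \<partial>Nm k) = p k * (\<integral>x. f x \<partial>N1) + (1 - p k) * (\<integral>x. f x \<partial>N0)"
    and fin: "finite I"
  shows "\<And>g B. g \<in> borel_measurable (PiM I Nm) \<Longrightarrow> (\<And>x. x \<in> space (PiM I Nm) \<Longrightarrow> \<bar>g x\<bar> \<le> B) \<Longrightarrow>
    (\<integral>x. g x \<partial>PiM I Nm) = (\<Sum>S\<in>Pow I. (\<Prod>k\<in>S. p k) * (\<Prod>k\<in>I-S. 1 - p k) *
        (\<integral>x. g x \<partial>PiM I (\<lambda>k. if k \<in> S then N1 else N0)))"
  using fin
proof (induction I rule: finite_induct)
  case empty
  have "PiM {} Nm = PiM {} (\<lambda>k. if k \<in> {} then N1 else N0)" by (simp add: PiM_empty)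
  then show ?case by simp
next
  case (insert i I g B)
  define ch where "ch (S::'i set) = (\<lambda>k. if k \<in> S then N1 else N0)" for S
  have chP: "prob_space (ch S k)" for S k using P0 P1 by (simp add: ch_def)
  have chS: "sets (ch S k) = sets N0" for S k using S1 by (simp add: ch_def)
  have setsP: "sets (PiM J (ch S)) = sets (PiM J Nm)" for J :: "'i set" and S
    by (rule sets_PiM_cong) (auto simp: chS Sm)
  have spP: "space (PiM J (ch S)) = space (PiM J Nm)" for J :: "'i set" and S
    using setsP by (rule sets_eq_imp_space_eq)
  have spN1: "space N1 = space N0" using S1 by (rule sets_eq_imp_space_eq)
  have spNm: "space (Nm k) = space N0" for k using Sm by (rule sets_eq_imp_space_eq)
  interpret Q: product_sigma_finite Nm
    unfolding product_sigma_finite_def using Pm prob_space_imp_sigma_finite by blast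
  interpret N0: prob_space N0 by fact
  interpret N1: prob_space N1 by fact
  have PIm: "prob_space (PiM J Nm)" for J :: "'i set" by (rule prob_space_PiM) (simp add: Pm)
  have PIc: "prob_space (PiM J (ch S))" for J :: "'i set" and S by (rule prob_space_PiM) (simp add: chP)
  have gm: "g \<in> borel_measurable (PiM (insert i I) Nm)" by fact
  have gb: "\<And>x. x \<in> space (PiM (insert i I) Nm) \<Longrightarrow> \<bar>g x\<bar> \<le> B" by fact
  have gint: "integrable (PiM (insert i I) Nm) g"
    using bounded_integral(1)[OF PIm gm gb] .
  define A where "A N x = (\<integral>y. g (x(i:=y)) \<partial>N)" for N x
  have upd_meas: "(\<lambda>y. g (x(i:=y))) \<in> borel_measurable N0" if x: "x \<in> space (PiM I Nm)" for x
  proof -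
    have "(\<lambda>y. g (x(i:=y))) \<in> borel_measurable (Nm i)"
      using measurable_comp[OF measurable_component_update[OF x insert(2)] gm] by (simp add: comp_def)
    then show ?thesis using measurable_cong_sets[OF Sm[of i] refl, of borel] by blast
  qed
  have upd_sp: "x(i:=y) \<in> space (PiM (insert i I) Nm)" if x: "x \<in> space (PiM I Nm)" and y: "y \<in> space N0" for x y
    using measurable_space[OF measurable_component_update[OF x insert(2)], of y] y spNm[of i] by simp
  have upd_b: "\<bar>g (x(i:=y))\<bar> \<le> B" if "x \<in> space (PiM I Nm)" "y \<in> space N0" for x y
    using gb[OF upd_sp[OF that]] .
  have pairm: "(\<lambda>(x, y). g (x(i:=y))) \<in> borel_measurable (PiM I Nm \<Otimes>\<^sub>M N)" if "sets N = sets N0" for N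
  proof -
    have "(\<lambda>(x, y). g (x(i:=y))) \<in> borel_measurable (PiM I Nm \<Otimes>\<^sub>M Nm i)"
      using measurable_comp[OF measurable_add_dim gm] by (simp add: comp_def case_prod_beta')
    moreover have "sets (PiM I Nm \<Otimes>\<^sub>M Nm i) = sets (PiM I Nm \<Otimes>\<^sub>M N)"
      by (rule sets_pair_measure_cong) (auto simp: that Sm)
    ultimately show ?thesis using measurable_cong_sets[of "PiM I Nm \<Otimes>\<^sub>M Nm i" "PiM I Nm \<Otimes>\<^sub>M N" borel borel] by blast
  qed
  have Ameas: "A N \<in> borel_measurable (PiM I Nm)" if "prob_space N" "sets N = sets N0" for N
  proof -
    interpret N: prob_space N by fact
    show ?thesis unfolding A_def
      by (rule N.borel_measurable_lebesgue_integral) (use pairm[OF that(2)] in simp)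
  qed
  have Ab: "\<bar>A N x\<bar> \<le> B" if "prob_space N" "sets N = sets N0" "x \<in> space (PiM I Nm)" for N x
  proof -
    have sp: "space N = space N0" using that(2) by (rule sets_eq_imp_space_eq)
    show ?thesis unfolding A_def
      by (rule bounded_integral(2)[OF that(1)])
         (use upd_meas[OF that(3)] measurable_cong_sets[OF that(2) refl, of borel] upd_b[OF that(3)] sp in \<open>auto\<close>)
  qed
  have step1: "(\<integral>x. g x \<partial>PiM (insert i I) Nm) = (\<integral>x. p i * A N1 x + (1 - p i) * A N0 x \<partial>PiM I Nm)"
  proof -
    have "(\<integral>x. g x \<partial>PiM (insert i I) Nm) = (\<integral>x. (\<integral>y. g (x(i:=y)) \<partial>Nm i) \<partial>PiM I Nm)"
      by (rule Q.product_integral_insert[OF insert(1,2) gint])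
    also have "\<dots> = (\<integral>x. p i * A N1 x + (1 - p i) * A N0 x \<partial>PiM I Nm)"
    proof (rule Bochner_Integration.integral_cong)
      fix x assume x: "x \<in> space (PiM I Nm)"
      show "(\<integral>y. g (x(i := y)) \<partial>Nm i) = p i * A N1 x + (1 - p i) * A N0 x"
        unfolding A_def by (rule mix[OF upd_meas[OF x] upd_b[OF x]])
    qed simp
    finally show ?thesis .
  qed
  have intA: "integrable (PiM I Nm) (A N)" if "prob_space N" "sets N = sets N0" for N
    by (rule bounded_integral(1)[OF PIm Ameas[OF that] Ab[OF that]])
  have step2: "(\<integral>x. p i * A N1 x + (1 - p i) * A N0 x \<partial>PiM I Nm)
      = p i * (\<integral>x. A N1 x \<partial>PiM I Nm) + (1 - p i) * (\<integral>x. A N0 x \<partial>PiM I Nm)"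
    using intA[OF P1 S1] intA[OF P0 refl] by simp
  define w where "w (J::'i set) S = (\<Prod>k\<in>S. p k) * (\<Prod>k\<in>J-S. 1 - p k)" for J S
  have IH1: "(\<integral>x. A N x \<partial>PiM I Nm) = (\<Sum>S\<in>Pow I. w I S * (\<integral>x. A N x \<partial>PiM I (ch S)))"
    if "prob_space N" "sets N = sets N0" for N
    unfolding w_def ch_def by (rule insert(3)[OF Ameas[OF that] Ab[OF that]])
  have bck: "(\<integral>x. A (ch T i) x \<partial>PiM I (ch S)) = (\<integral>x. g x \<partial>PiM (insert i I) (ch T))"
    if ST: "S \<subseteq> I" "T - {i} = S" for S T
  proof -
    interpret C: product_sigma_finite "ch T"
      unfolding product_sigma_finite_def using chP prob_space_imp_sigma_finite by blast
    have gm': "g \<in> borel_measurable (PiM (insert i I) (ch T))"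
      using gm measurable_cong_sets[OF setsP refl, of "insert i I" T borel] by blast
    have gint': "integrable (PiM (insert i I) (ch T)) g"
      by (rule bounded_integral(1)[OF PIc gm']) (use gb spP in auto)
    have eq: "PiM I (ch T) = PiM I (ch S)"
      by (rule PiM_cong) (use ST insert(2) in \<open>auto simp: ch_def\<close>)
    show ?thesis
      unfolding C.product_integral_insert[OF insert(1,2) gint'] eq A_def ..
  qed
  have back1: "(\<integral>x. A N1 x \<partial>PiM I (ch S)) = (\<integral>x. g x \<partial>PiM (insert i I) (ch (insert i S)))"
    if "S \<subseteq> I" for S
    using bck[of S "insert i S"] that insert(2) by (auto simp: ch_def)
  have back0: "(\<integral>x. A N0 x \<partial>PiM I (ch S)) = (\<integral>x. g x \<partial>PiM (insert i I) (ch S))"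
    if "S \<subseteq> I" for S
  proof -
    have "i \<notin> S" using that insert(2) by auto
    then show ?thesis using bck[of S S] that by (auto simp: ch_def)
  qed
  define G where "G S = (\<integral>x. g x \<partial>PiM (insert i I) (ch S))" for S
  have L: "(\<integral>x. g x \<partial>PiM (insert i I) Nm) =
      (\<Sum>S\<in>Pow I. p i * w I S * G (insert i S)) + (\<Sum>S\<in>Pow I. (1 - p i) * w I S * G S)"
    unfolding step1 step2 IH1[OF P1 S1] IH1[OF P0 refl] sum_distrib_left G_def
    by (intro arg_cong2[where f="(+)"] sum.cong refl) (auto simp: back1 back0)
  have finP: "finite (Pow I)" using insert(1) by simp
  have dis: "Pow I \<inter> insert i ` Pow I = {}" using insert(2) by auto
  have inj: "inj_on (insert i) (Pow I)" using insert(2) unfolding inj_on_def by (metis PowD insert_ident subsetD)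
  have w1: "w (insert i I) (insert i S) = p i * w I S" if "S \<subseteq> I" for S
  proof -
    have "finite S" using that insert(1) finite_subset by blast
    moreover have "i \<notin> S" using that insert(2) by auto
    moreover have "insert i I - insert i S = I - S" using insert(2) by auto
    ultimately show ?thesis by (simp add: w_def)
  qed
  have w0: "w (insert i I) S = (1 - p i) * w I S" if "S \<subseteq> I" for S
  proof -
    have "insert i I - S = insert i (I - S)" using that insert(2) by auto
    moreover have "finite (I - S)" using insert(1) by simp
    moreover have "i \<notin> I - S" using insert(2) by simp
    ultimately show ?thesis by (simp add: w_def)
  qed
  have R: "(\<Sum>S\<in>Pow (insert i I). w (insert i I) S * G S) =
      (\<Sum>S\<in>Pow I. p i * w I S * G (insert i S)) + (\<Sum>S\<in>Pow I. (1 - p i) * w I S * G S)"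
  proof -
    have "(\<Sum>S\<in>Pow (insert i I). w (insert i I) S * G S) =
        (\<Sum>S\<in>Pow I. w (insert i I) S * G S) + (\<Sum>S\<in>insert i ` Pow I. w (insert i I) S * G S)"
      unfolding Pow_insert by (rule sum.union_disjoint) (use finP dis in auto)
    also have "(\<Sum>S\<in>insert i ` Pow I. w (insert i I) S * G S) = (\<Sum>S\<in>Pow I. w (insert i I) (insert i S) * G (insert i S))"
      by (simp add: sum.reindex[OF inj])
    also have "\<dots> = (\<Sum>S\<in>Pow I. p i * w I S * G (insert i S))"
      by (rule sum.cong) (auto simp: w1)
    also have "(\<Sum>S\<in>Pow I. w (insert i I) S * G S) = (\<Sum>S\<in>Pow I. (1 - p i) * w I S * G S)"
      by (rule sum.cong) (auto simp: w0)
    finally show ?thesis by simp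
  qed
  show ?case
    unfolding L using R by (simp add: w_def G_def ch_def)
qed

lemma sum_pow_prod:
  fixes a b :: "'k \<Rightarrow> real"
  assumes "finite I"
  shows "(\<Sum>S\<in>Pow I. (\<Prod>k\<in>S. a k) * (\<Prod>k\<in>I-S. b k)) = (\<Prod>k\<in>I. a k + b k)"
  using prod_add[OF assms, of a b] by simp

lemma sum_pow_prod2:
  fixes q r :: "'k \<Rightarrow> real"
  assumes "finite I"
  shows "(\<Sum>S\<in>Pow I. ((\<Prod>k\<in>S. q k) * (\<Prod>k\<in>I-S. 1 - q k)) * ((\<Prod>k\<in>S. r k) * (\<Prod>k\<in>I-S. 1 - r k)))
       = (\<Prod>k\<in>I. q k * r k + (1 - q k) * (1 - r k))"
proof -
  have "(\<Sum>S\<in>Pow I. ((\<Prod>k\<in>S. q k) * (\<Prod>k\<in>I-S. 1 - q k)) * ((\<Prod>k\<in>S. r k) * (\<Prod>k\<in>I-S. 1 - r k)))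
      = (\<Sum>S\<in>Pow I. (\<Prod>k\<in>S. q k * r k) * (\<Prod>k\<in>I-S. (1 - q k) * (1 - r k)))"
    by (rule sum.cong) (auto simp: prod.distrib)
  also have "\<dots> = (\<Prod>k\<in>I. q k * r k + (1 - q k) * (1 - r k))"
    by (rule sum_pow_prod[OF assms])
  finally show ?thesis .
qed

lemma prod_if_snd:
  fixes \<alpha> :: real
  assumes "j \<in> {1..K}"
  shows "(\<Prod>k\<in>{1..n::nat}\<times>{1..K::nat}. if snd k = j then \<alpha> else 1) = \<alpha> ^ n"
proof -
  have "(\<Prod>k\<in>{1..n::nat}\<times>{1..K::nat}. if snd k = j then \<alpha> else 1)
      = (\<Prod>k\<in>{k\<in>{1..n}\<times>{1..K}. snd k = j}. \<alpha>)"
    by (rule prod.inter_filter[symmetric]) simp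
  also have "{k\<in>{1..n}\<times>{1..K}. snd k = j} = {1..n} \<times> {j}" using assms by auto
  finally show ?thesis by (simp add: card_cartesian_product)
qed

lemma weight_bound:
  fixes n K j :: nat and \<epsilon> :: real
  assumes n: "n \<ge> 1" and j: "j \<in> {1..K}" and eps: "96 * real n * \<epsilon>\<^sup>2 = 1"
  defines "I \<equiv> {1..n}\<times>{1..K}"
  defines "qp \<equiv> (\<lambda>k::nat\<times>nat. if snd k = j then 1/2 + \<epsilon> else 1/2)"
  defines "qm \<equiv> (\<lambda>k::nat\<times>nat. if snd k = j then 1/2 - \<epsilon> else 1/2)"
  shows "(\<Sum>S\<in>Pow I. \<bar>(\<Prod>k\<in>S. qp k) * (\<Prod>k\<in>I-S. 1 - qp k) - (\<Prod>k\<in>S. qm k) * (\<Prod>k\<in>I-S. 1 - qm k)\<bar>) \<le> 1/2"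
proof -
  define w where "w q S = (\<Prod>k\<in>S. q k) * (\<Prod>k\<in>I-S. 1 - q k)" for q :: "nat\<times>nat \<Rightarrow> real" and S
  have finI: "finite I" by (simp add: I_def)
  have cross: "(\<Sum>S\<in>Pow I. w q S * w r S) = (\<Prod>k\<in>I. q k * r k + (1 - q k) * (1 - r k))" for q r
    unfolding w_def by (rule sum_pow_prod2[OF finI])
  define x where "x = 4 * \<epsilon>\<^sup>2"
  have pow2: "(2::real) ^ card I * (\<Prod>k\<in>I. c k) = (\<Prod>k\<in>I. 2 * c k)" for c
    by (simp add: prod.distrib)
  have e1: "(2::real) ^ card I * (\<Sum>S\<in>Pow I. w q S * w r S) = (\<Prod>k\<in>I. if snd k = j then 1 + s * x else 1)"
    if "q = qp \<and> r = qp \<and> s = 1 \<or> q = qm \<and> r = qm \<and> s = 1 \<or> q = qp \<and> r = qm \<and> s = -1" for q r s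
    unfolding cross pow2 using that
    by (intro prod.cong refl) (auto simp: qp_def qm_def x_def power2_eq_square algebra_simps)
  have P: "(\<Prod>k\<in>I. if snd k = j then \<alpha> else 1) = \<alpha> ^ n" for \<alpha> :: real
    unfolding I_def by (rule prod_if_snd[OF j])
  define D where "D = (\<Sum>S\<in>Pow I. (w qp S - w qm S)\<^sup>2)"
  have Deq: "D = (\<Sum>S\<in>Pow I. w qp S * w qp S) + (\<Sum>S\<in>Pow I. w qm S * w qm S) - 2 * (\<Sum>S\<in>Pow I. w qp S * w qm S)"
    unfolding D_def by (simp add: power2_eq_square algebra_simps sum.distrib sum_subtractf sum_distrib_left)
  have "(2::real) ^ card I * D = 2 ^ card I * (\<Sum>S\<in>Pow I. w qp S * w qp S) + 2 ^ card I * (\<Sum>S\<in>Pow I. w qm S * w qm S) - 2 * (2 ^ card I * (\<Sum>S\<in>Pow I. w qp S * w qm S))"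
    unfolding Deq by (simp add: algebra_simps)
  also have "\<dots> = (1 + x) ^ n + (1 + x) ^ n - 2 * (1 - x) ^ n"
    unfolding e1[of qp qp 1, simplified] e1[of qm qm 1, simplified] e1[of qp qm "-1", simplified] P by simp
  finally have D2: "(2::real) ^ card I * D = 2 * (1 + x) ^ n - 2 * (1 - x) ^ n" by simp
  have xn: "real n * x = 1/24" using eps by (simp add: x_def)
  have x0: "0 \<le> x" by (simp add: x_def)
  have "(1 + x) ^ n \<le> exp x ^ n"
    by (rule power_mono) (use x0 exp_ge_add_one_self[of x] in auto)
  also have "\<dots> = exp (real n * x)" by (simp add: exp_of_nat_mult)
  also have "\<dots> \<le> 1 + 1/24 + (1/24)\<^sup>2" unfolding xn using exp_bound[of "1/24"] by simp
  finally have up: "(1 + x) ^ n \<le> 1 + 1/24 + (1/24)\<^sup>2" .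
  have "1 * x \<le> real n * x" using n x0 by (intro mult_right_mono) auto
  then have "x \<le> 1" using xn by simp
  then have low: "1 - 1/24 \<le> (1 - x) ^ n"
    using Bernoulli_inequality[of "-x" n] xn by simp
  have D1: "(2::real) ^ card I * D \<le> 1/4"
    unfolding D2 using up low unfolding power2_eq_square by linarith
  have CS: "(\<Sum>S\<in>Pow I. \<bar>w qp S - w qm S\<bar> * 1)\<^sup>2 \<le> (\<Sum>S\<in>Pow I. \<bar>w qp S - w qm S\<bar>\<^sup>2) * (\<Sum>S\<in>Pow I. 1\<^sup>2)"
    by (rule Cauchy_Schwarz_ineq_sum)
  have "(\<Sum>S\<in>Pow I. 1\<^sup>2 :: real) = 2 ^ card I" using finI by (simp add: card_Pow)
  with CS have "(\<Sum>S\<in>Pow I. \<bar>w qp S - w qm S\<bar>)\<^sup>2 \<le> 2 ^ card I * D"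
    by (simp add: D_def mult.commute)
  with D1 have "(\<Sum>S\<in>Pow I. \<bar>w qp S - w qm S\<bar>)\<^sup>2 \<le> (1/2)\<^sup>2" by (simp add: power2_eq_square)
  then have "(\<Sum>S\<in>Pow I. \<bar>w qp S - w qm S\<bar>) \<le> 1/2"
    by (rule power2_le_imp_le) simp
  then show ?thesis by (simp add: w_def)
qed

lemma Dcdf_facts:
  assumes F: "F \<in> Dcdf a b" and ab: "a \<le> b"
  shows "real_distribution (interval_measure F)" "cdf (interval_measure F) = F"
    "emeasure (interval_measure F) {a..b} = 1"
    "prob_space (restrict_space (interval_measure F) {a..b})"
proof -
  have c: "is_cdf F" and la: "(F \<longlongrightarrow> 0) (at_left a)" and Fb: "F b = 1"
    using F by (auto simp: Dcdf_def)
  have mono: "\<And>x y. x \<le> y \<Longrightarrow> F x \<le> F y" and rc: "\<And>x. continuous (at_right x) F"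
    and bot: "(F \<longlongrightarrow> 0) at_bot" and top: "(F \<longlongrightarrow> 1) at_top"
    using c by (auto simp: is_cdf_def mono_def)
  show RD: "real_distribution (interval_measure F)"
    by (rule real_distribution_interval_measure[OF mono rc bot top])
  show cdfF: "cdf (interval_measure F) = F"
    by (rule cdf_interval_measure[OF mono rc bot])
  interpret R: real_distribution "interval_measure F" by (rule RD)
  have "(cdf (interval_measure F) \<longlongrightarrow> measure (interval_measure F) {..<a}) (at_left a)"
    by (rule R.cdf_at_left)
  then have "(F \<longlongrightarrow> measure (interval_measure F) {..<a}) (at_left a)" by (simp add: cdfF)
  then have m0: "measure (interval_measure F) {..<a} = 0"
    using la tendsto_unique[OF trivial_limit_at_left_real] by blast
  have mb: "measure (interval_measure F) {..b} = 1" using fun_cong[OF cdfF, of b] Fb by (simp add: cdf_def)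
  have "{a..b} = {..b} - {..<a}" by auto
  moreover have "measure (interval_measure F) ({..b} - {..<a}) = measure (interval_measure F) {..b} - measure (interval_measure F) {..<a}"
    by (rule R.finite_measure_Diff) (use ab in auto)
  ultimately have "measure (interval_measure F) {a..b} = measure (interval_measure F) {..b} - measure (interval_measure F) {..<a}"
    by simp
  then have "measure (interval_measure F) {a..b} = 1" using m0 mb by simp
  then show E: "emeasure (interval_measure F) {a..b} = 1" by (simp add: R.emeasure_eq_measure)
  show "prob_space (restrict_space (interval_measure F) {a..b})"
    by (rule prob_space_restrict_space) (use E in auto)
qed

lemma mixture_IM:
  fixes H1 H2 :: "real \<Rightarrow> real" and \<tau> :: real and h :: "real \<Rightarrow> real"
  assumes H1: "H1 \<in> Dcdf a b" and H2: "H2 \<in> Dcdf a b" and Jt: "(\<lambda>x. \<tau> * H1 x + (1 - \<tau>) * H2 x) \<in> Dcdf a b"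
    and ab: "a \<le> b" and t: "0 \<le> \<tau>" "\<tau> \<le> 1"
    and hm: "h \<in> borel_measurable borel" and hb: "\<And>x. \<bar>h x\<bar> \<le> B"
  shows "(\<integral>x. h x \<partial>interval_measure (\<lambda>x. \<tau> * H1 x + (1 - \<tau>) * H2 x))
       = \<tau> * (\<integral>x. h x \<partial>interval_measure H1) + (1 - \<tau>) * (\<integral>x. h x \<partial>interval_measure H2)"
proof -
  let ?J = "\<lambda>x. \<tau> * H1 x + (1 - \<tau>) * H2 x"
  let ?M1 = "interval_measure H1" and ?M2 = "interval_measure H2"
  let ?B = "measure_pmf (bernoulli_pmf \<tau>)"
  let ?P = "?B \<Otimes>\<^sub>M (?M1 \<Otimes>\<^sub>M ?M2)"
  define sel where "sel = (\<lambda>\<omega>::bool \<times> real \<times> real. if fst \<omega> then fst (snd \<omega>) else snd (snd \<omega>))"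
  define \<nu> where "\<nu> = distr ?P borel sel"
  interpret R1: real_distribution ?M1 using Dcdf_facts[OF H1 ab] by simp
  interpret R2: real_distribution ?M2 using Dcdf_facts[OF H2 ab] by simp
  interpret RJ: real_distribution "interval_measure ?J" using Dcdf_facts[OF Jt ab] by simp
  interpret P12: pair_prob_space ?M1 ?M2 by unfold_locales
  interpret PB: prob_space ?B by (rule prob_space_measure_pmf)
  interpret PP: pair_prob_space ?B "?M1 \<Otimes>\<^sub>M ?M2" by unfold_locales
  have selm: "sel \<in> measurable ?P borel"
    unfolding sel_def by measurable
  have gen: "(\<integral>x. f x \<partial>\<nu>) = \<tau> * (\<integral>x. f x \<partial>?M1) + (1 - \<tau>) * (\<integral>x. f x \<partial>?M2)"
    if fm: "f \<in> borel_measurable borel" and fb: "\<And>x. \<bar>f x\<bar> \<le> Cb" for f :: "real \<Rightarrow> real" and Cb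
  proof -
    have fsel: "(\<lambda>\<omega>. f (sel \<omega>)) \<in> borel_measurable ?P" using selm fm by measurable
    have int: "integrable ?P (\<lambda>\<omega>. f (sel \<omega>))"
      by (rule PP.integrable_const_bound[where B=Cb]) (use fsel fb in auto)
    have "(\<integral>x. f x \<partial>\<nu>) = (\<integral>\<omega>. f (sel \<omega>) \<partial>?P)"
      unfolding \<nu>_def using selm fm by (simp add: integral_distr)
    also have "\<dots> = (\<integral>b. (\<integral>xy. f (sel (b, xy)) \<partial>(?M1 \<Otimes>\<^sub>M ?M2)) \<partial>?B)"
      by (rule PP.integral_fst'[symmetric, OF int])
    also have "\<dots> = \<tau> * (\<integral>xy. f (fst xy) \<partial>(?M1 \<Otimes>\<^sub>M ?M2)) + (1 - \<tau>) * (\<integral>xy. f (snd xy) \<partial>(?M1 \<Otimes>\<^sub>M ?M2))"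
      using t by (simp add: sel_def)
    also have "(\<integral>xy. f (fst xy) \<partial>(?M1 \<Otimes>\<^sub>M ?M2)) = (\<integral>x. f x \<partial>?M1)"
    proof -
      have "(\<integral>xy. f (fst xy) \<partial>(?M1 \<Otimes>\<^sub>M ?M2)) = (\<integral>x. f x \<partial>distr (?M1 \<Otimes>\<^sub>M ?M2) ?M1 fst)"
        using fm by (subst integral_distr) auto
      also have "distr (?M1 \<Otimes>\<^sub>M ?M2) ?M1 fst = ?M1" by (rule R2.distr_pair_fst)
      finally show ?thesis .
    qed
    also have "(\<integral>xy. f (snd xy) \<partial>(?M1 \<Otimes>\<^sub>M ?M2)) = (\<integral>x. f x \<partial>?M2)"
    proof -
      have fs: "(\<lambda>xy. f (snd xy)) \<in> borel_measurable (?M1 \<Otimes>\<^sub>M ?M2)" using fm by measurable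
      have "integrable (?M1 \<Otimes>\<^sub>M ?M2) (\<lambda>xy. f (snd xy))"
        by (rule P12.integrable_const_bound[where B=Cb]) (use fs fb in auto)
      then have "(\<integral>xy. f (snd xy) \<partial>(?M1 \<Otimes>\<^sub>M ?M2)) = (\<integral>x. (\<integral>y. f (snd (x, y)) \<partial>?M2) \<partial>?M1)"
        by (rule P12.integral_fst'[symmetric])
      also have "\<dots> = (\<integral>y. f y \<partial>?M2)" using R1.prob_space by simp
      finally show ?thesis .
    qed
    finally show ?thesis .
  qed
  have RN: "real_distribution \<nu>"
  proof -
    have "prob_space \<nu>" unfolding \<nu>_def by (rule PP.prob_space_distr[OF selm])
    then show ?thesis unfolding real_distribution_def real_distribution_axioms_def \<nu>_def by simp
  qed
  interpret RN: real_distribution \<nu> by (rule RN)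
  have "cdf \<nu> = cdf (interval_measure ?J)"
  proof
    fix x
    have "cdf \<nu> x = (\<integral>y. indicator {..x} y \<partial>\<nu>)" by (simp add: cdf_def)
    also have "\<dots> = \<tau> * (\<integral>y. indicator {..x} y \<partial>?M1) + (1 - \<tau>) * (\<integral>y. indicator {..x} y \<partial>?M2)"
      by (rule gen[of _ 1]) auto
    also have "\<dots> = \<tau> * H1 x + (1 - \<tau>) * H2 x"
      using fun_cong[OF Dcdf_facts(2)[OF H1 ab], of x] fun_cong[OF Dcdf_facts(2)[OF H2 ab], of x] by (simp add: cdf_def)
    also have "\<dots> = cdf (interval_measure ?J) x" using Dcdf_facts(2)[OF Jt ab] by simp
    finally show "cdf \<nu> x = cdf (interval_measure ?J) x" .
  qed
  then have "\<nu> = interval_measure ?J"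
    by (rule cdf_unique[OF RN RJ.real_distribution_axioms])
  then show ?thesis using gen[OF hm hb] by simp
qed

lemma mixture_restr:
  fixes H1 H2 :: "real \<Rightarrow> real" and \<tau> :: real and f :: "real \<Rightarrow> real"
  assumes H1: "H1 \<in> Dcdf a b" and H2: "H2 \<in> Dcdf a b" and Jt: "(\<lambda>x. \<tau> * H1 x + (1 - \<tau>) * H2 x) \<in> Dcdf a b"
    and ab: "a \<le> b" and t: "0 \<le> \<tau>" "\<tau> \<le> 1"
    and fm: "f \<in> borel_measurable (restrict_space borel {a..b})" and fb: "\<And>x. x \<in> {a..b} \<Longrightarrow> \<bar>f x\<bar> \<le> B"
  shows "(\<integral>x. f x \<partial>restrict_space (interval_measure (\<lambda>x. \<tau> * H1 x + (1 - \<tau>) * H2 x)) {a..b})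
       = \<tau> * (\<integral>x. f x \<partial>restrict_space (interval_measure H1) {a..b})
         + (1 - \<tau>) * (\<integral>x. f x \<partial>restrict_space (interval_measure H2) {a..b})"
proof -
  have eq: "(\<integral>x. f x \<partial>restrict_space (interval_measure F) {a..b}) = (\<integral>x. indicator {a..b} x *\<^sub>R f x \<partial>interval_measure F)" for F
    by (rule integral_restrict_space) simp
  have hm: "(\<lambda>x. indicator {a..b} x *\<^sub>R f x) \<in> borel_measurable borel"
    using fm by (subst borel_measurable_restrict_space_iff[symmetric]) auto
  have hb: "\<bar>indicator {a..b} x *\<^sub>R f x\<bar> \<le> \<bar>B\<bar>" for x
    using fb[of x] by (auto simp: indicator_def)
  show ?thesis unfolding eq
    by (rule mixture_IM[OF H1 H2 Jt ab t hm hb])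
qed

definition Om :: "real \<Rightarrow> real \<Rightarrow> nat \<Rightarrow> nat \<Rightarrow> ((nat \<times> nat \<Rightarrow> real) \<times> (nat \<Rightarrow> real)) measure" where
  "Om a b K n = PiM ({1..n} \<times> {1..K}) (\<lambda>_. restrict_space borel {a..b}) \<Otimes>\<^sub>M PiM {1..Suc n} (\<lambda>_. borel)"

lemma sets_sample: "sets PG = sets borel \<Longrightarrow> sets (sample_space a b K n F PG) = sets (Om a b K n)"
  unfolding sample_space_def outcome_space_def Om_def
  apply (intro sets_pair_measure_cong sets_PiM_cong refl)
   apply (clarsimp split: prod.split)
   apply (rule sets_restrict_space_cong) apply simp
  apply simp
  done

lemma hist_meas:
  assumes pol: "\<forall>t\<in>{1..n}. (\<lambda>(h, g). pol n t h g) \<in> measurable (Hspace a b (t - 1) \<Otimes>\<^sub>M borel) (count_space {1..K})"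
  shows "t \<le> n \<Longrightarrow> (\<lambda>\<omega>. hist pol n (fst \<omega>) (snd \<omega>) t) \<in> measurable (Om a b K n) (Hspace a b t)"
proof (induction t)
  case 0
  show ?case by (auto simp: Hspace_def PiM_empty intro!: measurable_const)
next
  case (Suc t)
  let ?Mh = "restrict_space borel {a..b} \<Otimes>\<^sub>M (borel :: real measure)"
  have IH: "(\<lambda>\<omega>. hist pol n (fst \<omega>) (snd \<omega>) t) \<in> measurable (Om a b K n) (Hspace a b t)"
    using Suc by simp
  have gS: "(\<lambda>\<omega>. snd \<omega> (Suc t)) \<in> borel_measurable (Om a b K n)"
    unfolding Om_def using Suc(2)
    by (intro measurable_comp[OF measurable_snd measurable_component_singleton, unfolded comp_def]) auto
  have pr: "(\<lambda>\<omega>. (hist pol n (fst \<omega>) (snd \<omega>) t, snd \<omega> (Suc t))) \<in> measurable (Om a b K n) (Hspace a b t \<Otimes>\<^sub>M borel)"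
    using IH gS by (rule measurable_Pair)
  have polS: "(\<lambda>(h, g). pol n (Suc t) h g) \<in> measurable (Hspace a b t \<Otimes>\<^sub>M borel) (count_space {1..K})"
    using bspec[OF pol, of "Suc t"] Suc(2) by simp
  have P: "(\<lambda>\<omega>. pol n (Suc t) (hist pol n (fst \<omega>) (snd \<omega>) t) (snd \<omega> (Suc t))) \<in> measurable (Om a b K n) (count_space {1..K})"
    using measurable_comp[OF pr polS] unfolding comp_def case_prod_conv .
  have Yi: "(\<lambda>\<omega>. fst \<omega> (Suc t, i)) \<in> measurable (Om a b K n) (restrict_space borel {a..b})" if "i \<in> {1..K}" for i
    unfolding Om_def using Suc(2) that
    by (intro measurable_comp[OF measurable_fst measurable_component_singleton, unfolded comp_def]) auto
  have Y: "(\<lambda>\<omega>. fst \<omega> (Suc t, pol n (Suc t) (hist pol n (fst \<omega>) (snd \<omega>) t) (snd \<omega> (Suc t)))) \<in> measurable (Om a b K n) (restrict_space borel {a..b})"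
    by (rule measurable_compose_countable'[where f="\<lambda>i \<omega>. fst \<omega> (Suc t, i)", OF Yi P]) auto
  have E: "(\<lambda>\<omega>. (fst \<omega> (Suc t, pol n (Suc t) (hist pol n (fst \<omega>) (snd \<omega>) t) (snd \<omega> (Suc t))), snd \<omega> (Suc t))) \<in> measurable (Om a b K n) ?Mh"
    using Y gS by (rule measurable_Pair)
  have pr2: "(\<lambda>\<omega>. (hist pol n (fst \<omega>) (snd \<omega>) t, (fst \<omega> (Suc t, pol n (Suc t) (hist pol n (fst \<omega>) (snd \<omega>) t) (snd \<omega> (Suc t))), snd \<omega> (Suc t))))
      \<in> measurable (Om a b K n) (PiM {1..t} (\<lambda>_. ?Mh) \<Otimes>\<^sub>M ?Mh)"
    using IH E unfolding Hspace_def by (rule measurable_Pair)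
  have ad: "(\<lambda>(f, y). f(Suc t := y)) \<in> measurable (PiM {1..t} (\<lambda>_. ?Mh) \<Otimes>\<^sub>M ?Mh) (PiM (insert (Suc t) {1..t}) (\<lambda>_. ?Mh))"
    by (rule measurable_add_dim)
  have ins: "insert (Suc t) {1..t} = {1..Suc t}" by auto
  have m: "(\<lambda>\<omega>. (hist pol n (fst \<omega>) (snd \<omega>) t)(Suc t := (fst \<omega> (Suc t, pol n (Suc t) (hist pol n (fst \<omega>) (snd \<omega>) t) (snd \<omega> (Suc t))), snd \<omega> (Suc t))))
      \<in> measurable (Om a b K n) (Hspace a b (Suc t))"
    using measurable_comp[OF pr2 ad] unfolding ins Hspace_def comp_def case_prod_conv .
  have eq: "(\<lambda>\<omega>. hist pol n (fst \<omega>) (snd \<omega>) (Suc t)) = (\<lambda>\<omega>. (hist pol n (fst \<omega>) (snd \<omega>) t)(Suc t := (fst \<omega> (Suc t, pol n (Suc t) (hist pol n (fst \<omega>) (snd \<omega>) t) (snd \<omega> (Suc t))), snd \<omega> (Suc t))))"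
    by (rule ext) (rule hist.simps(2))
  show ?case by (subst eq) (rule m)
qed

lemma rec_meas:
  assumes P: "is_policy K a b M pol recm" and n: "n \<ge> K"
  shows "(\<lambda>\<omega>. recm n (hist pol n (fst \<omega>) (snd \<omega>) n) (snd \<omega> (Suc n))) \<in> measurable (Om a b K n) (restrict_space (PiM {1..K} (\<lambda>_. borel)) M)"
proof -
  have pol: "\<forall>t\<in>{1..n}. (\<lambda>(h, g). pol n t h g) \<in> measurable (Hspace a b (t - 1) \<Otimes>\<^sub>M borel) (count_space {1..K})"
    and rc: "(\<lambda>(h, g). recm n h g) \<in> measurable (Hspace a b n \<Otimes>\<^sub>M borel) (restrict_space (PiM {1..K} (\<lambda>_. borel)) M)"
    using P n unfolding is_policy_def by auto
  have H: "(\<lambda>\<omega>. hist pol n (fst \<omega>) (snd \<omega>) n) \<in> measurable (Om a b K n) (Hspace a b n)"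
    by (rule hist_meas[where pol=pol and n=n and a=a and b=b and K=K, OF pol]) simp
  have gS: "(\<lambda>\<omega>. snd \<omega> (Suc n)) \<in> borel_measurable (Om a b K n)"
    unfolding Om_def
    by (intro measurable_comp[OF measurable_snd measurable_component_singleton, unfolded comp_def]) auto
  show ?thesis
    using measurable_comp[OF measurable_Pair[OF H gS] rc] unfolding comp_def case_prod_conv .
qed

lemma L2_bound:
  assumes nu: "\<nu> \<in> simplexK K" and ga: "\<gamma> \<in> simplexK K" and K: "K \<ge> 1"
  shows "\<exists>j\<in>{1..K}. (L2_set (\<lambda>i. \<nu> i - \<gamma> i) {1..K})\<^sup>2 \<le> 2 * \<bar>\<nu> j - \<gamma> j\<bar>"
proof -
  let ?A = "{1..K}"
  have ne: "(\<lambda>i. \<bar>\<nu> i - \<gamma> i\<bar>) ` ?A \<noteq> {}" using K by auto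
  obtain j where j: "j \<in> ?A" "\<bar>\<nu> j - \<gamma> j\<bar> = Max ((\<lambda>i. \<bar>\<nu> i - \<gamma> i\<bar>) ` ?A)"
    using Max_in[OF _ ne] by auto
  have mx: "\<bar>\<nu> i - \<gamma> i\<bar> \<le> \<bar>\<nu> j - \<gamma> j\<bar>" if "i \<in> ?A" for i
    unfolding j(2) using that by (intro Max_ge) auto
  have nn: "0 \<le> \<nu> i" "0 \<le> \<gamma> i" if "i \<in> ?A" for i
    using nu ga that by (auto simp: simplexK_def PiE_def Pi_def)
  have s1: "(\<Sum>i\<in>?A. \<nu> i) = 1" "(\<Sum>i\<in>?A. \<gamma> i) = 1"
    using nu ga by (auto simp: simplexK_def)
  have "(L2_set (\<lambda>i. \<nu> i - \<gamma> i) ?A)\<^sup>2 = (\<Sum>i\<in>?A. (\<nu> i - \<gamma> i)\<^sup>2)"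
    unfolding L2_set_def by (simp add: sum_nonneg)
  also have "\<dots> \<le> (\<Sum>i\<in>?A. \<bar>\<nu> j - \<gamma> j\<bar> * (\<nu> i + \<gamma> i))"
  proof (rule sum_mono)
    fix i assume i: "i \<in> ?A"
    have "(\<nu> i - \<gamma> i)\<^sup>2 = \<bar>\<nu> i - \<gamma> i\<bar> * \<bar>\<nu> i - \<gamma> i\<bar>" by (simp add: power2_eq_square)
    also have "\<dots> \<le> \<bar>\<nu> j - \<gamma> j\<bar> * (\<nu> i + \<gamma> i)"
      using mx[OF i] nn[OF i] by (intro mult_mono) auto
    finally show "(\<nu> i - \<gamma> i)\<^sup>2 \<le> \<bar>\<nu> j - \<gamma> j\<bar> * (\<nu> i + \<gamma> i)" .
  qed
  also have "\<dots> = \<bar>\<nu> j - \<gamma> j\<bar> * ((\<Sum>i\<in>?A. \<nu> i) + (\<Sum>i\<in>?A. \<gamma> i))"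
    by (simp add: sum_distrib_left sum.distrib distrib_left)
  also have "\<dots> = 2 * \<bar>\<nu> j - \<gamma> j\<bar>"
    unfolding s1 by simp
  finally show ?thesis using j(1) by blast
qed

lemma mix_J:
  assumes d: "\<delta> \<in> simplexK K" and F: "\<And>i. i \<in> {1..K} \<Longrightarrow> F i = (\<lambda>x. \<tau> i * H1 x + (1 - \<tau> i) * H2 x)"
  shows "mix K \<delta> F = (\<lambda>x. (\<Sum>i=1..K. \<delta> i * \<tau> i) * H1 x + (1 - (\<Sum>i=1..K. \<delta> i * \<tau> i)) * H2 x)"
proof
  fix x
  have s1: "(\<Sum>i=1..K. \<delta> i) = 1" using d by (simp add: simplexK_def)
  have "mix K \<delta> F x = (\<Sum>i=1..K. \<delta> i * (\<tau> i * H1 x + (1 - \<tau> i) * H2 x))"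
    unfolding mix_def using F by (intro sum.cong) auto
  also have "\<dots> = (\<Sum>i=1..K. (\<delta> i * \<tau> i) * H1 x + \<delta> i * H2 x - (\<delta> i * \<tau> i) * H2 x)"
    by (intro sum.cong) (auto simp: algebra_simps)
  also have "\<dots> = (\<Sum>i=1..K. \<delta> i * \<tau> i) * H1 x + (\<Sum>i=1..K. \<delta> i) * H2 x - (\<Sum>i=1..K. \<delta> i * \<tau> i) * H2 x"
    by (simp only: sum_subtractf sum.distrib sum_distrib_right)
  also have "\<dots> = (\<Sum>i=1..K. \<delta> i * \<tau> i) * H1 x + ((\<Sum>i=1..K. \<delta> i) - (\<Sum>i=1..K. \<delta> i * \<tau> i)) * H2 x"
    by (simp add: algebra_simps)
  finally show "mix K \<delta> F x = (\<Sum>i=1..K. \<delta> i * \<tau> i) * H1 x + (1 - (\<Sum>i=1..K. \<delta> i * \<tau> i)) * H2 x"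
    using s1 by simp
qed

lemma convex_comb_01:
  assumes d: "\<delta> \<in> simplexK K" and t: "\<And>i. i \<in> {1..K} \<Longrightarrow> 0 \<le> \<tau> i \<and> \<tau> i \<le> 1"
  shows "0 \<le> (\<Sum>i=1..K. \<delta> i * \<tau> i)" "(\<Sum>i=1..K. \<delta> i * \<tau> i) \<le> 1"
proof -
  have nn: "0 \<le> \<delta> i" if "i \<in> {1..K}" for i
    using d that by (auto simp: simplexK_def PiE_def Pi_def)
  have s1: "(\<Sum>i=1..K. \<delta> i) = 1" using d by (simp add: simplexK_def)
  show "0 \<le> (\<Sum>i=1..K. \<delta> i * \<tau> i)" using nn t by (intro sum_nonneg) auto
  have "(\<Sum>i=1..K. \<delta> i * \<tau> i) \<le> (\<Sum>i=1..K. \<delta> i)"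
    using nn t by (intro sum_mono) (auto intro: mult_left_le)
  then show "(\<Sum>i=1..K. \<delta> i * \<tau> i) \<le> 1" using s1 by simp
qed

lemma sum_delta_q:
  assumes d: "\<delta> \<in> simplexK K" and j: "j \<in> {1..K}"
  shows "(\<Sum>i=1..K. \<delta> i * (if i = j then 1/2 + e else 1/2)) = 1/2 + e * \<delta> j"
proof -
  have s1: "(\<Sum>i=1..K. \<delta> i) = 1" using d by (simp add: simplexK_def)
  have "(\<Sum>i=1..K. \<delta> i * (if i = j then 1/2 + e else 1/2)) = (\<Sum>i=1..K. \<delta> i / 2 + (if i = j then e * \<delta> i else 0))"
    by (intro sum.cong) (auto simp: algebra_simps)
  also have "\<dots> = (\<Sum>i=1..K. \<delta> i) / 2 + e * \<delta> j"
    using j by (simp add: sum.distrib sum_divide_distrib)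
  finally show ?thesis using s1 by simp
qed

lemma tv:
  fixes a b \<epsilon> Bd :: real and H1 H2 :: "real \<Rightarrow> real" and J and f
  assumes J_def: "J = (\<lambda>\<tau>::real. (\<lambda>x. \<tau> * H1 x + (1 - \<tau>) * H2 x))"
    and ab: "a < b" and H1D: "H1 \<in> Dcdf a b" and H2D: "H2 \<in> Dcdf a b"
    and JD: "\<And>\<tau>. \<tau> \<in> {0..1} \<Longrightarrow> J \<tau> \<in> Dcdf a b"
    and PG: "prob_space PG" "sets PG = sets borel"
    and j: "j \<in> {1..K}" and n: "n \<ge> 1" and eps: "96 * real n * \<epsilon>\<^sup>2 = 1" "0 < \<epsilon>" "\<epsilon> \<le> 1/2"
    and fm: "f \<in> borel_measurable (Om a b K n)" and fb: "\<And>\<omega>. \<omega> \<in> space (Om a b K n) \<Longrightarrow> \<bar>f \<omega>\<bar> \<le> Bd"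
  shows "\<bar>(\<integral>\<omega>. f \<omega> \<partial>sample_space a b K n (\<lambda>i. J (if i = j then 1/2 + \<epsilon> else 1/2)) PG)
          - (\<integral>\<omega>. f \<omega> \<partial>sample_space a b K n (\<lambda>i. J (if i = j then 1/2 - \<epsilon> else 1/2)) PG)\<bar> \<le> Bd / 2"
proof -
  define I where "I = {1..n} \<times> {1..K}"
  define N0 where "N0 = restrict_space (interval_measure H2) {a..b}"
  define N1 where "N1 = restrict_space (interval_measure H1) {a..b}"
  define Nq where "Nq q = (\<lambda>k::nat\<times>nat. restrict_space (interval_measure (J (q (snd k)))) {a..b})" for q :: "nat \<Rightarrow> real"
  define PGn where "PGn = PiM {1..Suc n} (\<lambda>_. PG)"
  define ch where "ch S = (\<lambda>k::nat\<times>nat. if k \<in> S then N1 else N0)" for S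
  define h where "h y = (\<integral>g. f (y, g) \<partial>PGn)" for y
  have finI: "finite I" by (simp add: I_def)
  have ab': "a \<le> b" using ab by simp
  have P0: "prob_space N0" unfolding N0_def by (rule Dcdf_facts(4)[OF H2D ab'])
  have P1: "prob_space N1" unfolding N1_def by (rule Dcdf_facts(4)[OF H1D ab'])
  have setsN: "sets (restrict_space (interval_measure F) {a..b}) = sets (restrict_space borel {a..b})" for F
    by (rule sets_restrict_space_cong) simp
  have spN: "space (restrict_space (interval_measure F) {a..b}) = {a..b}" for F
    by (simp add: space_restrict_space)
  have PGnP: "prob_space PGn" unfolding PGn_def by (rule prob_space_PiM) (use PG in simp)
  interpret PGn: prob_space PGn by (rule PGnP)
  have setsPGn: "sets PGn = sets (PiM {1..Suc n} (\<lambda>_. borel))"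
    unfolding PGn_def by (rule sets_PiM_cong) (use PG in auto)
  have setsPiI: "sets (PiM I (Nq q)) = sets (PiM I (\<lambda>_. restrict_space borel {a..b}))" for q
    unfolding Nq_def by (rule sets_PiM_cong) (auto simp: setsN)
  have setsPiC: "sets (PiM I (ch S)) = sets (PiM I (\<lambda>_. restrict_space borel {a..b}))" for S
    unfolding ch_def N0_def N1_def by (rule sets_PiM_cong) (auto simp: setsN)
  have setsPair: "sets (PiM I (Nq q) \<Otimes>\<^sub>M PGn) = sets (Om a b K n)" for q
    unfolding Om_def I_def[symmetric] by (rule sets_pair_measure_cong[OF setsPiI setsPGn])
  have spPair: "space (PiM I (Nq q) \<Otimes>\<^sub>M PGn) = space (Om a b K n)" for q
    using setsPair by (rule sets_eq_imp_space_eq)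
  have fm': "f \<in> borel_measurable (PiM I (Nq q) \<Otimes>\<^sub>M PGn)" for q
    using fm measurable_cong_sets[OF setsPair refl, of q borel] by blast
  have hm: "h \<in> borel_measurable (PiM I (Nq q))" for q
    unfolding h_def
    by (rule PGn.borel_measurable_lebesgue_integral) (use fm'[of q] in simp)
  have hb: "\<bar>h y\<bar> \<le> Bd" if y: "y \<in> space (PiM I (Nq q))" for y q
  proof -
    have m: "(\<lambda>g. f (y, g)) \<in> borel_measurable PGn"
      using measurable_comp[OF measurable_Pair1'[OF y] fm'[of q]] by (simp add: comp_def)
    have "(y, g) \<in> space (Om a b K n)" if "g \<in> space PGn" for g
      using y that spPair[of q] unfolding space_pair_measure by blast
    then show ?thesis unfolding h_def
      by (intro bounded_integral(2)[OF PGnP m]) (simp add: fb)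
  qed
  have spPiI: "space (PiM I (Nq q)) = space (PiM I (Nq q'))" for q q'
    using setsPiI by (metis sets_eq_imp_space_eq)
  have spPiC: "space (PiM I (ch S)) = space (PiM I (Nq q))" for S q
    using setsPiI setsPiC by (metis sets_eq_imp_space_eq)
  define G where "G S = (\<integral>y. h y \<partial>PiM I (ch S))" for S
  have Gb: "\<bar>G S\<bar> \<le> Bd" for S
  proof -
    have P: "prob_space (PiM I (ch S))" by (rule prob_space_PiM) (simp add: ch_def P0 P1)
    have m: "h \<in> borel_measurable (PiM I (ch S))"
      using hm[of "\<lambda>_. 0"] measurable_cong_sets[of "PiM I (ch S)" "PiM I (Nq (\<lambda>_. 0))" borel borel] setsPiC setsPiI by metis
    show ?thesis unfolding G_def
      by (rule bounded_integral(2)[OF P m]) (use hb spPiC in blast)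
  qed
  have expand: "(\<integral>\<omega>. f \<omega> \<partial>sample_space a b K n (\<lambda>i. J (q i)) PG)
      = (\<Sum>S\<in>Pow I. (\<Prod>k\<in>S. q (snd k)) * (\<Prod>k\<in>I-S. 1 - q (snd k)) * G S)"
    if q01: "\<And>i. 0 \<le> q i \<and> q i \<le> 1" for q
  proof -
    have NqP: "prob_space (Nq q k)" for k
      unfolding Nq_def by (rule Dcdf_facts(4)[OF JD ab']) (use q01 in auto)
    have PiP: "prob_space (PiM I (Nq q))" by (rule prob_space_PiM) (simp add: NqP)
    interpret PiI: prob_space "PiM I (Nq q)" by (rule PiP)
    interpret PP: pair_prob_space "PiM I (Nq q)" PGn by unfold_locales
    have out: "outcome_space a b K n (\<lambda>i. J (q i)) = PiM I (Nq q)"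
      unfolding outcome_space_def I_def Nq_def by (rule PiM_cong) (auto split: prod.split)
    have samp: "sample_space a b K n (\<lambda>i. J (q i)) PG = PiM I (Nq q) \<Otimes>\<^sub>M PGn"
      unfolding sample_space_def out PGn_def ..
    have fint: "integrable (PiM I (Nq q) \<Otimes>\<^sub>M PGn) f"
      by (rule bounded_integral(1)[OF PP.prob_space_axioms fm'[of q]]) (use fb spPair in auto)
    have "(\<integral>\<omega>. f \<omega> \<partial>sample_space a b K n (\<lambda>i. J (q i)) PG) = (\<integral>y. h y \<partial>PiM I (Nq q))"
      unfolding samp h_def using PP.integral_fst'[OF fint] by simp
    also have "\<dots> = (\<Sum>S\<in>Pow I. (\<Prod>k\<in>S. q (snd k)) * (\<Prod>k\<in>I-S. 1 - q (snd k)) * (\<integral>y. h y \<partial>PiM I (\<lambda>k. if k \<in> S then N1 else N0)))"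
    proof (rule mix_expand[OF P0 P1 NqP _ _ _ _ finI hm hb])
      show "sets N1 = sets N0" unfolding N0_def N1_def by (simp add: setsN)
      show "sets (Nq q k) = sets N0" for k :: "nat \<times> nat" unfolding Nq_def N0_def by (simp add: setsN)
      show "0 \<le> q (snd k) \<and> q (snd k) \<le> 1" for k :: "nat \<times> nat" using q01 by simp
      fix k :: "nat \<times> nat" and f' :: "real \<Rightarrow> real" and B :: real
      assume f'm: "f' \<in> borel_measurable N0" and f'b: "\<And>x. x \<in> space N0 \<Longrightarrow> \<bar>f' x\<bar> \<le> B"
      have f'm2: "f' \<in> borel_measurable (restrict_space borel {a..b})"
        using f'm measurable_cong_sets[OF setsN[of H2] refl, of borel] unfolding N0_def by blast
      have f'b2: "\<bar>f' x\<bar> \<le> B" if "x \<in> {a..b}" for x using f'b that unfolding N0_def spN by blast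
      have Jt: "(\<lambda>x. q (snd k) * H1 x + (1 - q (snd k)) * H2 x) \<in> Dcdf a b"
        using JD[of "q (snd k)"] q01 unfolding J_def by auto
      show "(\<integral>x. f' x \<partial>Nq q k) = q (snd k) * (\<integral>x. f' x \<partial>N1) + (1 - q (snd k)) * (\<integral>x. f' x \<partial>N0)"
        unfolding Nq_def N0_def N1_def J_def
        by (rule mixture_restr[OF H1D H2D Jt ab' _ _ f'm2 f'b2]) (use q01 in auto)
    qed
    finally show ?thesis by (simp add: G_def ch_def)
  qed
  define qp where "qp = (\<lambda>i::nat. if i = j then 1/2 + \<epsilon> else 1/2)"
  define qm where "qm = (\<lambda>i::nat. if i = j then 1/2 - \<epsilon> else 1/2)"
  have qp01: "0 \<le> qp i \<and> qp i \<le> 1" for i using eps by (auto simp: qp_def)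
  have qm01: "0 \<le> qm i \<and> qm i \<le> 1" for i using eps by (auto simp: qm_def)
  define wp where "wp S = (\<Prod>k\<in>S. qp (snd k)) * (\<Prod>k\<in>I-S. 1 - qp (snd k))" for S
  define wm where "wm S = (\<Prod>k\<in>S. qm (snd k)) * (\<Prod>k\<in>I-S. 1 - qm (snd k))" for S
  have W: "(\<Sum>S\<in>Pow I. \<bar>wp S - wm S\<bar>) \<le> 1/2"
    using weight_bound[OF n j eps(1)] unfolding wp_def wm_def qp_def qm_def I_def by simp
  have "(\<integral>\<omega>. f \<omega> \<partial>sample_space a b K n (\<lambda>i. J (qp i)) PG) - (\<integral>\<omega>. f \<omega> \<partial>sample_space a b K n (\<lambda>i. J (qm i)) PG)
      = (\<Sum>S\<in>Pow I. (wp S - wm S) * G S)"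
    unfolding expand[OF qp01] expand[OF qm01] wp_def wm_def
    by (simp add: sum_subtractf left_diff_distrib)
  also have "\<bar>\<dots>\<bar> \<le> (\<Sum>S\<in>Pow I. \<bar>wp S - wm S\<bar> * Bd)"
    by (rule order_trans[OF sum_abs]) (auto intro!: sum_mono mult_left_mono simp: abs_mult Gb)
  also have "\<dots> = (\<Sum>S\<in>Pow I. \<bar>wp S - wm S\<bar>) * Bd" by (simp add: sum_distrib_right)
  also have "\<dots> \<le> 1/2 * Bd"
  proof (rule mult_right_mono[OF W])
    have "\<bar>G {}\<bar> \<le> Bd" by (rule Gb)
    then show "0 \<le> Bd" by simp
  qed
  finally show ?thesis by (simp add: qp_def qm_def)
qed

lemma core:
  fixes a b c_minus :: real and T :: "(real \<Rightarrow> real) \<Rightarrow> real" and H1 H2 :: "real \<Rightarrow> real" and J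
    and \<nu> \<gamma> :: "nat \<Rightarrow> real" and PG :: "real measure"
  assumes J_def: "J = (\<lambda>\<tau>::real. (\<lambda>x. \<tau> * H1 x + (1 - \<tau>) * H2 x))"
    and ab: "a < b" and H1D: "H1 \<in> Dcdf a b" and H2D: "H2 \<in> Dcdf a b"
    and JD: "\<And>\<tau>. \<tau> \<in> {0..1} \<Longrightarrow> J \<tau> \<in> Dcdf a b"
    and cm: "c_minus > 0"
    and T_incr: "\<And>\<tau>1 \<tau>2. 0 \<le> \<tau>1 \<Longrightarrow> \<tau>1 \<le> \<tau>2 \<Longrightarrow> \<tau>2 \<le> 1 \<Longrightarrow> T (J \<tau>2) - T (J \<tau>1) \<ge> c_minus * (\<tau>2 - \<tau>1)"
    and K: "K \<ge> 2" and Msub: "M \<subseteq> simplexK K" and pol: "is_policy K a b M pol recm"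
    and PG: "prob_space PG" "sets PG = sets borel" and n: "n \<ge> K"
    and nu: "\<nu> \<in> M" and ga: "\<gamma> \<in> M" and j: "j \<in> {1..K}" and ord: "\<gamma> j \<le> \<nu> j"
  shows "c_minus * (1 / sqrt (96 * real n)) * (\<nu> j - \<gamma> j) / 4
     \<le> Sup {expected_regret a b T K M pol recm F PG n | F. \<forall>i\<in>{1..K}. F i \<in> J ` {0..1}}"
proof -
  define V where "V x = T (J x)" for x
  have Vinc: "c_minus * (y - x) \<le> V y - V x" if "0 \<le> x" "x \<le> y" "y \<le> 1" for x y
    using T_incr[OF that] by (simp add: V_def)
  have Vmono: "V x \<le> V y" if "0 \<le> x" "x \<le> y" "y \<le> 1" for x y
  proof -
    have "0 \<le> c_minus * (y - x)" using cm that by simp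
    then show ?thesis using Vinc[OF that] by linarith
  qed
  have V01: "V 0 \<le> V x \<and> V x \<le> V 1" if "0 \<le> x" "x \<le> 1" for x
    using Vmono[of 0 x] Vmono[of x 1] that by auto
  have ab': "a \<le> b" using ab by simp
  have n1: "n \<ge> 1" using K n by simp
  define R where "R \<omega> = recm n (hist pol n (fst \<omega>) (snd \<omega>) n) (snd \<omega> (Suc n))" for \<omega>
  have Rm: "R \<in> measurable (Om a b K n) (restrict_space (PiM {1..K} (\<lambda>_. borel)) M)"
    unfolding R_def by (rule rec_meas[OF pol n])
  have RM: "R \<omega> \<in> M" if "\<omega> \<in> space (Om a b K n)" for \<omega>
    using measurable_space[OF Rm that] by (simp add: space_restrict_space)
  have RS: "R \<omega> \<in> simplexK K" if "\<omega> \<in> space (Om a b K n)" for \<omega>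
    using RM[OF that] Msub by auto
  have simp01: "0 \<le> \<delta> j \<and> \<delta> j \<le> 1" if "\<delta> \<in> simplexK K" for \<delta>
    using that j by (auto simp: simplexK_def PiE_def Pi_def)
  have sp: "space (sample_space a b K n F PG) = space (Om a b K n)" for F
    using sets_sample[OF PG(2)] by (rule sets_eq_imp_space_eq)
  have setsS: "sets (sample_space a b K n F PG) = sets (Om a b K n)" for F
    using sets_sample[OF PG(2)] .
  have probS: "prob_space (sample_space a b K n F PG)" if F: "\<forall>i\<in>{1..K}. F i \<in> Dcdf a b" for F
    unfolding sample_space_def outcome_space_def
  proof (rule prob_space_pair)
    show "prob_space (PiM ({1..n} \<times> {1..K}) (\<lambda>(t, i). restrict_space (interval_measure (F i)) {a..b}))"
      by (rule prob_space_PiM) (use Dcdf_facts(4)[OF _ ab'] F in \<open>auto split: prod.split\<close>)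
    show "prob_space (PiM {1..Suc n} (\<lambda>_. PG))"
      by (rule prob_space_PiM) (use PG in simp)
  qed
  have Tmix: "T (mix K \<delta> F) = V (\<Sum>i=1..K. \<delta> i * \<tau> i)"
    if d: "\<delta> \<in> simplexK K" and F: "\<And>i. i \<in> {1..K} \<Longrightarrow> F i = J (\<tau> i)" for \<delta> F \<tau>
  proof -
    have "mix K \<delta> F = J (\<Sum>i=1..K. \<delta> i * \<tau> i)"
      unfolding J_def by (rule mix_J[OF d]) (use F in \<open>simp add: J_def\<close>)
    then show ?thesis by (simp add: V_def)
  qed
  have Mne: "M \<noteq> {}" using nu by auto
  define Sset where "Sset = {expected_regret a b T K M pol recm F PG n | F. \<forall>i\<in>{1..K}. F i \<in> J ` {0..1}}"
  have Ebound: "expected_regret a b T K M pol recm F PG n \<le> V 1 - V 0"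
    if F: "\<forall>i\<in>{1..K}. F i \<in> J ` {0..1}" for F
  proof -
    have "\<forall>i\<in>{1..K}. \<exists>t. t \<in> {0..1} \<and> F i = J t" using F unfolding image_def by blast
    then obtain \<tau> where \<tau>: "\<forall>i\<in>{1..K}. \<tau> i \<in> {0..1} \<and> F i = J (\<tau> i)"
      by (rule bchoice[THEN exE]) blast
    have TF: "V 0 \<le> T (mix K \<delta> F) \<and> T (mix K \<delta> F) \<le> V 1" if d: "\<delta> \<in> simplexK K" for \<delta>
    proof -
      have "0 \<le> (\<Sum>i=1..K. \<delta> i * \<tau> i)" "(\<Sum>i=1..K. \<delta> i * \<tau> i) \<le> 1"
        using convex_comb_01[OF d, of \<tau>] \<tau> by auto
      then show ?thesis using Tmix[OF d, of F \<tau>] \<tau> V01 by auto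
    qed
    have reg: "regret T K M pol recm F n (fst \<omega>) (snd \<omega>) \<le> V 1 - V 0" if w: "\<omega> \<in> space (Om a b K n)" for \<omega>
    proof -
      have "(SUP \<delta>\<in>M. T (mix K \<delta> F)) \<le> V 1"
        by (rule cSUP_least[OF Mne]) (use TF Msub in auto)
      moreover have "V 0 \<le> T (mix K (R \<omega>) F)" using TF[OF RS[OF w]] by simp
      ultimately show ?thesis unfolding regret_def R_def[symmetric] by simp
    qed
    have Fin: "\<forall>i\<in>{1..K}. F i \<in> Dcdf a b" using \<tau> JD by auto
    interpret P: prob_space "sample_space a b K n F PG" by (rule probS[OF Fin])
    show ?thesis
    proof (cases "integrable (sample_space a b K n F PG) (\<lambda>\<omega>. regret T K M pol recm F n (fst \<omega>) (snd \<omega>))")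
      case True
      show ?thesis unfolding expected_regret_def
        by (rule P.integral_le_const[OF True]) (use reg sp in \<open>auto intro!: AE_I2\<close>)
    next
      case False
      then show ?thesis using V01[of 0] by (simp add: expected_regret_def not_integrable_integral_eq)
    qed
  qed
  have bdd: "bdd_above Sset" unfolding Sset_def bdd_above_def using Ebound by blast
  define \<epsilon> where "\<epsilon> = 1 / sqrt (96 * real n)"
  have s96: "2 \<le> sqrt (96 * real n)" by (rule real_le_rsqrt) (use n1 in simp)
  have eps: "96 * real n * \<epsilon>\<^sup>2 = 1" "0 < \<epsilon>" "\<epsilon> \<le> 1/2"
    using n1 s96 by (auto simp: \<epsilon>_def power_divide)
  define Fe where "Fe e = (\<lambda>i. J (if i = j then 1/2 + e else 1/2))" for e
  define Se where "Se e = (SUP \<delta>\<in>M. V (1/2 + e * \<delta> j))" for e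
  define r where "r \<omega> = R \<omega> j" for \<omega>
  have r01: "0 \<le> r \<omega> \<and> r \<omega> \<le> 1" if "\<omega> \<in> space (Om a b K n)" for \<omega>
    unfolding r_def using simp01[OF RS[OF that]] .
  have rm: "r \<in> borel_measurable (Om a b K n)"
  proof -
    have "(\<lambda>x. x j) \<in> borel_measurable (restrict_space (PiM {1..K} (\<lambda>_. borel)) M)"
      by (rule measurable_restrict_space1) (rule measurable_component_singleton[OF j])
    from measurable_comp[OF Rm this] have "(\<lambda>x. R x j) \<in> borel_measurable (Om a b K n)" by (simp add: comp_def)
    moreover have "r = (\<lambda>x. R x j)" by (rule ext) (simp add: r_def)
    ultimately show ?thesis by simp
  qed
  have arg01: "0 \<le> 1/2 + e * x \<and> 1/2 + e * x \<le> 1" if "\<bar>e\<bar> \<le> 1/2" "0 \<le> x" "x \<le> 1" for e x :: real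
  proof -
    have "\<bar>e * x\<bar> \<le> 1/2 * 1" unfolding abs_mult using that by (intro mult_mono) auto
    then show ?thesis by auto
  qed
  have FeS: "\<forall>i\<in>{1..K}. Fe e i \<in> J ` {0..1}" if "\<bar>e\<bar> \<le> 1/2" for e
    using that unfolding Fe_def by (auto intro!: imageI)
  have FeD: "\<forall>i\<in>{1..K}. Fe e i \<in> Dcdf a b" if "\<bar>e\<bar> \<le> 1/2" for e
    using that unfolding Fe_def by (auto intro!: JD)
  have TFe: "T (mix K \<delta> (Fe e)) = V (1/2 + e * \<delta> j)" if "\<delta> \<in> simplexK K" for \<delta> e
    using Tmix[OF that, of "Fe e" "\<lambda>i. if i = j then 1/2 + e else 1/2"] sum_delta_q[OF that j, of e]
    by (simp add: Fe_def)
  have Sup_ge: "V (1/2 + e * \<delta> j) \<le> Se e" if "\<delta> \<in> M" "\<bar>e\<bar> \<le> 1/2" for \<delta> e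
  proof -
    have "bdd_above ((\<lambda>\<delta>. V (1/2 + e * \<delta> j)) ` M)"
      unfolding bdd_above_def using V01 arg01[OF that(2)] simp01 Msub by blast
    then show ?thesis unfolding Se_def by (rule cSUP_upper[OF that(1)])
  qed
  have Se_le: "Se e \<le> V 1" if "\<bar>e\<bar> \<le> 1/2" for e
    unfolding Se_def by (rule cSUP_least[OF Mne]) (use V01 arg01[OF that] simp01 Msub in blast)
  have regE: "regret T K M pol recm (Fe e) n (fst \<omega>) (snd \<omega>) = Se e - V (1/2 + e * r \<omega>)"
    if w: "\<omega> \<in> space (Om a b K n)" for \<omega> e
  proof -
    have "(SUP \<delta>\<in>M. T (mix K \<delta> (Fe e))) = Se e"
      unfolding Se_def by (rule SUP_cong) (use TFe Msub in auto)
    then show ?thesis unfolding regret_def R_def[symmetric] r_def using TFe[OF RS[OF w]] by simp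
  qed
  define Vc where "Vc x = V (max 0 (min 1 x))" for x
  have Vcm: "Vc \<in> borel_measurable borel"
  proof (rule borel_measurable_mono)
    show "mono Vc" unfolding mono_def Vc_def by (intro allI impI Vmono) auto
  qed
  have regM: "(\<lambda>\<omega>. regret T K M pol recm (Fe e) n (fst \<omega>) (snd \<omega>)) \<in> borel_measurable (sample_space a b K n (Fe e) PG)"
    if e: "\<bar>e\<bar> \<le> 1/2" for e
  proof -
    have m1: "(\<lambda>\<omega>. Se e - Vc (1/2 + e * r \<omega>)) \<in> borel_measurable (Om a b K n)"
      using Vcm rm by measurable
    have m2: "(\<lambda>\<omega>. Se e - Vc (1/2 + e * r \<omega>)) \<in> borel_measurable (sample_space a b K n (Fe e) PG)"
      using m1 measurable_cong_sets[OF setsS refl, of "Fe e" borel] by blast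
    show ?thesis
    proof (rule measurable_cong[THEN iffD1, OF _ m2])
      fix \<omega> assume "\<omega> \<in> space (sample_space a b K n (Fe e) PG)"
      then have w: "\<omega> \<in> space (Om a b K n)" using sp by simp
      have "max 0 (min 1 (1/2 + e * r \<omega>)) = 1/2 + e * r \<omega>" using arg01[OF e r01[OF w, THEN conjunct1] r01[OF w, THEN conjunct2]] by simp
      then show "Se e - Vc (1/2 + e * r \<omega>) = regret T K M pol recm (Fe e) n (fst \<omega>) (snd \<omega>)"
        using regE[OF w] by (simp add: Vc_def)
    qed
  qed
  have regB: "\<bar>regret T K M pol recm (Fe e) n (fst \<omega>) (snd \<omega>)\<bar> \<le> V 1 - V 0"
    if e: "\<bar>e\<bar> \<le> 1/2" and w: "\<omega> \<in> space (Om a b K n)" for e \<omega>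
  proof -
    have "V 0 \<le> V (1/2 + e * r \<omega>)" "V (1/2 + e * r \<omega>) \<le> V 1"
      using V01 arg01[OF e r01[OF w, THEN conjunct1] r01[OF w, THEN conjunct2]] by auto
    moreover have "V (1/2 + e * r \<omega>) \<le> Se e" using Sup_ge[OF RM[OF w] e] by (simp add: r_def)
    moreover have "Se e \<le> V 1" by (rule Se_le[OF e])
    ultimately show ?thesis unfolding regE[OF w] by simp
  qed
  have regI: "integrable (sample_space a b K n (Fe e) PG) (\<lambda>\<omega>. regret T K M pol recm (Fe e) n (fst \<omega>) (snd \<omega>))"
    if e: "\<bar>e\<bar> \<le> 1/2" for e
    by (rule bounded_integral(1)[OF probS[OF FeD[OF e]] regM[OF e]]) (use regB[OF e] sp in auto)
  have ep: "\<bar>\<epsilon>\<bar> \<le> 1/2" and em: "\<bar>-\<epsilon>\<bar> \<le> 1/2" using eps by auto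
  define \<Delta> where "\<Delta> = \<nu> j - \<gamma> j"
  have \<Delta>0: "0 \<le> \<Delta>" using ord by (simp add: \<Delta>_def)
  define ce where "ce = c_minus * \<epsilon>"
  have ce0: "0 < ce" using cm eps by (simp add: ce_def)
  define Bd where "Bd = ce * \<Delta>"
  define \<phi>p where "\<phi>p x = ce * min \<Delta> (max 0 (\<nu> j - x))" for x
  define \<phi>m where "\<phi>m x = ce * min \<Delta> (max 0 (x - \<gamma> j))" for x
  have nuj: "0 \<le> \<nu> j \<and> \<nu> j \<le> 1" and gaj: "0 \<le> \<gamma> j \<and> \<gamma> j \<le> 1"
    using simp01 nu ga Msub by auto
  have P1: "\<phi>p (r \<omega>) \<le> regret T K M pol recm (Fe \<epsilon>) n (fst \<omega>) (snd \<omega>)" if w: "\<omega> \<in> space (Om a b K n)" for \<omega>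
  proof -
    let ?x = "r \<omega>"
    have x01: "0 \<le> ?x" "?x \<le> 1" using r01[OF w] by auto
    have S1: "V (1/2 + \<epsilon> * \<nu> j) \<le> Se \<epsilon>" using Sup_ge[OF nu ep] .
    have S2: "V (1/2 + \<epsilon> * ?x) \<le> Se \<epsilon>" using Sup_ge[OF RM[OF w] ep] by (simp add: r_def)
    show ?thesis unfolding regE[OF w]
    proof (cases "?x \<le> \<nu> j")
      case True
      have a1: "0 \<le> 1/2 + \<epsilon> * ?x" using arg01[OF ep x01] by simp
      have a2: "1/2 + \<epsilon> * ?x \<le> 1/2 + \<epsilon> * \<nu> j" using True eps by (simp add: mult_left_mono)
      have a3: "1/2 + \<epsilon> * \<nu> j \<le> 1" using arg01[OF ep] nuj by simp
      have "c_minus * ((1/2 + \<epsilon> * \<nu> j) - (1/2 + \<epsilon> * ?x)) \<le> V (1/2 + \<epsilon> * \<nu> j) - V (1/2 + \<epsilon> * ?x)"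
        by (rule Vinc[OF a1 a2 a3])
      moreover have "c_minus * ((1/2 + \<epsilon> * \<nu> j) - (1/2 + \<epsilon> * ?x)) = ce * (\<nu> j - ?x)"
        by (simp add: ce_def algebra_simps)
      moreover have "\<phi>p ?x \<le> ce * (\<nu> j - ?x)"
        unfolding \<phi>p_def using ce0 True by (intro mult_left_mono) auto
      ultimately show "\<phi>p ?x \<le> Se \<epsilon> - V (1/2 + \<epsilon> * ?x)" using S1 by linarith
    next
      case False
      then have "\<phi>p ?x = 0" using \<Delta>0 by (simp add: \<phi>p_def)
      then show "\<phi>p ?x \<le> Se \<epsilon> - V (1/2 + \<epsilon> * ?x)" using S2 by simp
    qed
  qed
  have P2: "\<phi>m (r \<omega>) \<le> regret T K M pol recm (Fe (-\<epsilon>)) n (fst \<omega>) (snd \<omega>)" if w: "\<omega> \<in> space (Om a b K n)" for \<omega>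
  proof -
    let ?x = "r \<omega>"
    have x01: "0 \<le> ?x" "?x \<le> 1" using r01[OF w] by auto
    have S1: "V (1/2 + (-\<epsilon>) * \<gamma> j) \<le> Se (-\<epsilon>)" using Sup_ge[OF ga em] .
    have S2: "V (1/2 + (-\<epsilon>) * ?x) \<le> Se (-\<epsilon>)" using Sup_ge[OF RM[OF w] em] by (simp add: r_def)
    show ?thesis unfolding regE[OF w]
    proof (cases "\<gamma> j \<le> ?x")
      case True
      have a1: "0 \<le> 1/2 + (-\<epsilon>) * ?x" using arg01[OF em x01] by simp
      have a2: "1/2 + (-\<epsilon>) * ?x \<le> 1/2 + (-\<epsilon>) * \<gamma> j" using True eps by (simp add: mult_left_mono)
      have a3: "1/2 + (-\<epsilon>) * \<gamma> j \<le> 1" using arg01[OF em] gaj by simp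
      have "c_minus * ((1/2 + (-\<epsilon>) * \<gamma> j) - (1/2 + (-\<epsilon>) * ?x)) \<le> V (1/2 + (-\<epsilon>) * \<gamma> j) - V (1/2 + (-\<epsilon>) * ?x)"
        by (rule Vinc[OF a1 a2 a3])
      moreover have "c_minus * ((1/2 + (-\<epsilon>) * \<gamma> j) - (1/2 + (-\<epsilon>) * ?x)) = ce * (?x - \<gamma> j)"
        by (simp add: ce_def algebra_simps)
      moreover have "\<phi>m ?x \<le> ce * (?x - \<gamma> j)"
        unfolding \<phi>m_def using ce0 True by (intro mult_left_mono) auto
      ultimately show "\<phi>m ?x \<le> Se (-\<epsilon>) - V (1/2 + (-\<epsilon>) * ?x)" using S1 by linarith
    next
      case False
      then have "\<phi>m ?x = 0" using \<Delta>0 by (simp add: \<phi>m_def)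
      then show "\<phi>m ?x \<le> Se (-\<epsilon>) - V (1/2 + (-\<epsilon>) * ?x)" using S2 by simp
    qed
  qed
  have P3: "Bd \<le> \<phi>p x + \<phi>m x" for x
  proof -
    have "\<Delta> \<le> min \<Delta> (max 0 (\<nu> j - x)) + min \<Delta> (max 0 (x - \<gamma> j))"
      using ord unfolding \<Delta>_def by (auto simp: min_def max_def)
    then have "ce * \<Delta> \<le> ce * (min \<Delta> (max 0 (\<nu> j - x)) + min \<Delta> (max 0 (x - \<gamma> j)))"
      using ce0 by (intro mult_left_mono) auto
    then show ?thesis unfolding Bd_def \<phi>p_def \<phi>m_def by (simp add: distrib_left)
  qed
  have P4: "\<bar>\<phi>m x\<bar> \<le> Bd" "\<bar>\<phi>p x\<bar> \<le> Bd" for x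
  proof -
    have "0 \<le> min \<Delta> (max 0 (x - \<gamma> j))" "min \<Delta> (max 0 (x - \<gamma> j)) \<le> \<Delta>" using \<Delta>0 by auto
    then show "\<bar>\<phi>m x\<bar> \<le> Bd" unfolding \<phi>m_def Bd_def using ce0
      by (simp add: abs_mult mult_left_mono)
    have "0 \<le> min \<Delta> (max 0 (\<nu> j - x))" "min \<Delta> (max 0 (\<nu> j - x)) \<le> \<Delta>" using \<Delta>0 by auto
    then show "\<bar>\<phi>p x\<bar> \<le> Bd" unfolding \<phi>p_def Bd_def using ce0
      by (simp add: abs_mult mult_left_mono)
  qed
  have \<phi>mM: "(\<lambda>\<omega>. \<phi>m (r \<omega>)) \<in> borel_measurable (Om a b K n)"
    unfolding \<phi>m_def using rm by measurable
  have \<phi>pM: "(\<lambda>\<omega>. \<phi>p (r \<omega>)) \<in> borel_measurable (Om a b K n)"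
    unfolding \<phi>p_def using rm by measurable
  let ?Pp = "sample_space a b K n (Fe \<epsilon>) PG" and ?Pm = "sample_space a b K n (Fe (-\<epsilon>)) PG"
  interpret Pp: prob_space ?Pp by (rule probS[OF FeD[OF ep]])
  interpret Pm: prob_space ?Pm by (rule probS[OF FeD[OF em]])
  have mP: "f \<in> borel_measurable (sample_space a b K n F PG)" if "f \<in> borel_measurable (Om a b K n)" for f F
    using that measurable_cong_sets[OF setsS refl, of F borel] by blast
  have intp1: "integrable ?Pp (\<lambda>\<omega>. \<phi>p (r \<omega>))"
    by (rule bounded_integral(1)[OF probS[OF FeD[OF ep]] mP[OF \<phi>pM]], rule P4)
  have intp2: "integrable ?Pp (\<lambda>\<omega>. \<phi>m (r \<omega>))"
    by (rule bounded_integral(1)[OF probS[OF FeD[OF ep]] mP[OF \<phi>mM]], rule P4)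
  have intp3: "integrable ?Pm (\<lambda>\<omega>. \<phi>m (r \<omega>))"
    by (rule bounded_integral(1)[OF probS[OF FeD[OF em]] mP[OF \<phi>mM]], rule P4)
  note intp = intp1 intp2 intp3
  define Ep where "Ep = expected_regret a b T K M pol recm (Fe \<epsilon>) PG n"
  define Em where "Em = expected_regret a b T K M pol recm (Fe (-\<epsilon>)) PG n"
  have E1: "(\<integral>\<omega>. \<phi>p (r \<omega>) \<partial>?Pp) \<le> Ep"
    unfolding Ep_def expected_regret_def
    by (rule integral_mono[OF intp(1) regI[OF ep]]) (use P1 sp in auto)
  have E2: "(\<integral>\<omega>. \<phi>m (r \<omega>) \<partial>?Pm) \<le> Em"
    unfolding Em_def expected_regret_def
    by (rule integral_mono[OF intp(3) regI[OF em]]) (use P2 sp in auto)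
  have TV: "\<bar>(\<integral>\<omega>. \<phi>m (r \<omega>) \<partial>?Pp) - (\<integral>\<omega>. \<phi>m (r \<omega>) \<partial>?Pm)\<bar> \<le> Bd / 2"
  proof -
    have FeM: "Fe (-\<epsilon>) = (\<lambda>i. J (if i = j then 1/2 - \<epsilon> else 1/2))"
      unfolding Fe_def by (simp only: add_uminus_conv_diff)
    have FeP: "Fe \<epsilon> = (\<lambda>i. J (if i = j then 1/2 + \<epsilon> else 1/2))"
      unfolding Fe_def ..
    show ?thesis unfolding FeM FeP by (rule tv[OF J_def ab H1D H2D JD PG j n1 eps \<phi>mM P4(1)])
  qed
  have E3: "Bd \<le> (\<integral>\<omega>. \<phi>p (r \<omega>) \<partial>?Pp) + (\<integral>\<omega>. \<phi>m (r \<omega>) \<partial>?Pp)"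
  proof -
    have "Bd = (\<integral>\<omega>. Bd \<partial>?Pp)" using Pp.prob_space by simp
    also have "\<dots> \<le> (\<integral>\<omega>. \<phi>p (r \<omega>) + \<phi>m (r \<omega>) \<partial>?Pp)"
      by (rule integral_mono) (use intp P3 in auto)
    also have "\<dots> = (\<integral>\<omega>. \<phi>p (r \<omega>) \<partial>?Pp) + (\<integral>\<omega>. \<phi>m (r \<omega>) \<partial>?Pp)"
      by (rule Bochner_Integration.integral_add[OF intp(1,2)])
    finally show ?thesis .
  qed
  have sum: "Bd / 2 \<le> Ep + Em" using E1 E2 E3 TV by linarith
  have inS: "Ep \<in> Sset" "Em \<in> Sset"
    unfolding Sset_def Ep_def Em_def using FeS[OF ep] FeS[OF em] by blast+
  have "Ep \<le> Sup Sset" "Em \<le> Sup Sset" using cSup_upper[OF inS(1) bdd] cSup_upper[OF inS(2) bdd] by auto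
  then have "Bd / 4 \<le> Sup Sset" using sum by linarith
  then show ?thesis unfolding Sset_def Bd_def ce_def \<Delta>_def \<epsilon>_def by (simp add: mult.assoc)
qed

theorem theorem3p1:
  fixes a b C c_minus :: real
    and D :: "(real \<Rightarrow> real) set"
    and T :: "(real \<Rightarrow> real) \<Rightarrow> real"
    and H1 H2 :: "real \<Rightarrow> real"
  defines "J \<equiv> (\<lambda>\<tau>::real. (\<lambda>x. \<tau> * H1 x + (1 - \<tau>) * H2 x))"
  assumes ab: "a < b"
    and D_sub: "D \<subseteq> Dcdf a b" and D_ne: "D \<noteq> {}" and D_conv: "convex_fset D"
    and C_pos: "C > 0"
    and T_lip: "\<forall>F\<in>D. \<forall>G\<in>Dcdf a b. \<bar>T F - T G\<bar> \<le> C * supdist F G"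
    and H_in: "H1 \<in> D" "H2 \<in> D"
    and J_in: "\<forall>\<tau>\<in>{0..1}. J \<tau> \<in> D"
    and cm_pos: "c_minus > 0"
    and T_incr: "\<forall>\<tau>1 \<tau>2. 0 \<le> \<tau>1 \<and> \<tau>1 \<le> \<tau>2 \<and> \<tau>2 \<le> 1 \<longrightarrow>
                   T (J \<tau>2) - T (J \<tau>1) \<ge> c_minus * (\<tau>2 - \<tau>1)"
  shows "\<exists>c>0. \<forall>K::nat. \<forall>M. K \<ge> 2 \<and> closed M \<and> M \<subseteq> simplexK K
           \<and> (\<exists>\<nu>\<in>M. \<exists>\<gamma>\<in>M. \<nu> \<noteq> \<gamma>) \<longrightarrow>
         (\<forall>pol recm. is_policy K a b M pol recm \<longrightarrow>
          (\<forall>PG::real measure. prob_space PG \<and> sets PG = sets borel \<longrightarrow>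
           (\<forall>n\<ge>K.
             Sup {expected_regret a b T K M pol recm F PG n | F.
                    \<forall>i\<in>{1..K}. F i \<in> J ` {0..1}}
               \<ge> c * (diamK K M)\<^sup>2 / sqrt (real n))))"
proof -
  have JD: "\<And>\<tau>. \<tau> \<in> {0..1} \<Longrightarrow> J \<tau> \<in> Dcdf a b" using J_in D_sub by auto
  have H1D: "H1 \<in> Dcdf a b" and H2D: "H2 \<in> Dcdf a b" using H_in D_sub by auto
  have Tinc: "\<And>\<tau>1 \<tau>2. 0 \<le> \<tau>1 \<Longrightarrow> \<tau>1 \<le> \<tau>2 \<Longrightarrow> \<tau>2 \<le> 1 \<Longrightarrow> T (J \<tau>2) - T (J \<tau>1) \<ge> c_minus * (\<tau>2 - \<tau>1)"
    using T_incr by blast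
  have Jeq: "J = (\<lambda>\<tau>::real. (\<lambda>x. \<tau> * H1 x + (1 - \<tau>) * H2 x))" by (simp add: J_def)
  define c where "c = c_minus / (8 * sqrt 96)"
  have c0: "c > 0" using cm_pos by (simp add: c_def)
  show ?thesis
  proof (intro exI[of _ c] conjI c0 allI impI)
    fix K :: nat and M
    assume KM: "2 \<le> K \<and> closed M \<and> M \<subseteq> simplexK K \<and> (\<exists>\<nu>\<in>M. \<exists>\<gamma>\<in>M. \<nu> \<noteq> \<gamma>)"
    fix pol recm assume pol: "is_policy K a b M pol recm"
    fix PG :: "real measure" assume PG: "prob_space PG \<and> sets PG = sets borel"
    fix n :: nat assume n: "K \<le> n"
    have K2: "K \<ge> 2" and Msub: "M \<subseteq> simplexK K" using KM by auto
    have PG1: "prob_space PG" and PG2: "sets PG = sets borel" using PG by auto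
    define Sset where "Sset = {expected_regret a b T K M pol recm F PG n | F. \<forall>i\<in>{1..K}. F i \<in> J ` {0..1}}"
    define L where "L p = L2_set (\<lambda>i. fst p i - snd p i) {1..K}" for p :: "(nat \<Rightarrow> real) \<times> (nat \<Rightarrow> real)"
    have sn: "sqrt (real n) > 0" using n K2 by simp
    have sq: "sqrt (96 * real n) = sqrt 96 * sqrt (real n)" by (simp add: real_sqrt_mult)
    have bound: "c * (L (\<nu>, \<gamma>))\<^sup>2 / sqrt (real n) \<le> Sup Sset" if nu: "\<nu> \<in> M" and ga: "\<gamma> \<in> M" for \<nu> \<gamma>
    proof -
      have nS: "\<nu> \<in> simplexK K" "\<gamma> \<in> simplexK K" using nu ga Msub by auto
      have K1: "K \<ge> 1" using K2 by simp
      from L2_bound[OF nS K1] obtain j where j: "j \<in> {1..K}" "(L (\<nu>, \<gamma>))\<^sup>2 \<le> 2 * \<bar>\<nu> j - \<gamma> j\<bar>"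
        unfolding L_def by auto
      have main: "c_minus * (1 / sqrt (96 * real n)) * \<bar>\<nu> j - \<gamma> j\<bar> / 4 \<le> Sup Sset"
      proof (cases "\<gamma> j \<le> \<nu> j")
        case True
        from core[OF Jeq ab H1D H2D JD cm_pos Tinc K2 Msub pol PG1 PG2 n nu ga j(1) True]
        show ?thesis using True by (simp add: Sset_def)
      next
        case False
        then have F: "\<nu> j \<le> \<gamma> j" by simp
        from core[OF Jeq ab H1D H2D JD cm_pos Tinc K2 Msub pol PG1 PG2 n ga nu j(1) F]
        show ?thesis using F by (simp add: Sset_def abs_minus_commute)
      qed
      have "c * (L (\<nu>, \<gamma>))\<^sup>2 / sqrt (real n) \<le> c * (2 * \<bar>\<nu> j - \<gamma> j\<bar>) / sqrt (real n)"
        using j(2) c0 sn by (intro divide_right_mono mult_left_mono) auto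
      also have "\<dots> = c_minus * (1 / sqrt (96 * real n)) * \<bar>\<nu> j - \<gamma> j\<bar> / 4"
        unfolding sq c_def by (simp add: field_simps)
      finally show ?thesis using main by linarith
    qed
    define X where "X = Sup Sset * sqrt (real n) / c"
    have LX: "(L p)\<^sup>2 \<le> X" if pM: "p \<in> M \<times> M" for p
    proof -
      obtain \<nu> \<gamma> where p: "p = (\<nu>, \<gamma>)" "\<nu> \<in> M" "\<gamma> \<in> M" using pM by (cases p) auto
      have "c * (L p)\<^sup>2 / sqrt (real n) \<le> Sup Sset" using bound[OF p(2,3)] p(1) by simp
      then have "c * (L p)\<^sup>2 \<le> Sup Sset * sqrt (real n)" using sn by (simp add: divide_le_eq)
      then show ?thesis unfolding X_def using c0 by (simp add: pos_le_divide_eq mult.commute)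
    qed
    have L0: "0 \<le> L p" for p unfolding L_def by (rule L2_set_nonneg)
    have LsX: "L p \<le> sqrt X" if "p \<in> M \<times> M" for p
      using real_le_rsqrt[OF LX[OF that]] .
    obtain \<nu>0 where nu0: "\<nu>0 \<in> M" using KM by auto
    have ne: "M \<times> M \<noteq> {}" using nu0 by auto
    have dL: "diamK K M = (SUP p\<in>M \<times> M. L p)" unfolding diamK_def L_def ..
    have d1: "diamK K M \<le> sqrt X" unfolding dL by (rule cSUP_least[OF ne LsX])
    have bddL: "bdd_above (L ` (M \<times> M))" using LsX by (auto simp: bdd_above_def)
    have d0: "0 \<le> diamK K M"
    proof -
      have "L (\<nu>0, \<nu>0) \<le> (SUP p\<in>M \<times> M. L p)" by (rule cSUP_upper[OF _ bddL]) (use nu0 in auto)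
      then show ?thesis unfolding dL using L0[of "(\<nu>0, \<nu>0)"] by linarith
    qed
    have X0: "0 \<le> X" using LX[of "(\<nu>0, \<nu>0)"] nu0 by (smt (verit) mem_Sigma_iff zero_le_power2)
    have "(diamK K M)\<^sup>2 \<le> (sqrt X)\<^sup>2" by (rule power_mono[OF d1 d0])
    then have dX: "(diamK K M)\<^sup>2 \<le> X" using X0 by simp
    have "c * (diamK K M)\<^sup>2 / sqrt (real n) \<le> c * X / sqrt (real n)"
      using dX c0 sn by (intro divide_right_mono mult_left_mono) auto
    also have "\<dots> = Sup Sset" unfolding X_def using c0 sn by simp
    finally show "c * (diamK K M)\<^sup>2 / sqrt (real n) \<le> Sup {expected_regret a b T K M pol recm F PG n | F. \<forall>i\<in>{1..K}. F i \<in> J ` {0..1}}"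
      unfolding Sset_def .
  qed
qed

end
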